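(* In generalized non-signalling theory (box world), let $A_1,A_2,B_1,\ldots,B_n$ be a composite system of boxes in which the boxes $B_1,\ldots,B_n$ are classical (each has exactly one possible input), while $A_1$ and $A_2$ may be non-classical. Then every measurement on this system is either a basic measurement or a probabilistic mixture of basic measurements.
   Context: Box world (GNST): a box is a system with a finite set of inputs (fiducial measurements) $x$ and a finite set of outputs $a$. A system of $n$ boxes has states $\mathbf{p}$ given by all collections of numbers $p(\mathbf{a}|\mathbf{x})=p(a_1,\ldots,a_n|x_1,\ldots,x_n)\ge 0$ (one for each tuple of outputs $\mathbf{a}$ and tuple of inputs $\mathbf{x}$) satisfying normalization $\sum_{\mathbf{a}}p(\mathbf{a}|\mathbf{x})=1$ for all $\mathbf{x}$ and the no-signalling conditions: for each $i$, $\sum_{a_i}p(a_1,\ldots,a_n|x_1,\ldots,x_i,\ldots,x_n)$ does not depend on $x_i$. Reduced states are obtained by summing out outputs. An effect is any linear map $\mu$ from the set of states to $[0,1]$; a vector $\mathbf{R}$ (indexed by pairs $(\mathbf{a},\mathbf{x})$) represents $\mu$ if $\mu(\mathbf{p})=\sum_{\mathbf{a},\mathbf{x}}p(\mathbf{a}|\mathbf{x})R(\mathbf{a}|\mathbf{x})$ for all states $\mathbf{p}$. A measurement is a finite set of pairs $(r,\mu_r)$ of outcomes and effects with $\sum_r\mu_r$ equal to the constant map $1$; every such set is an allowed measurement. A basic measurement is one performed as follows: choose a box and an input for it and observe its output; based on the outputs obtained so far, choose a not-yet-measured box and an input for it; repeat until all boxes are measured; then output $r(\mathbf{a})$, a deterministic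 function of the full output tuple $\mathbf{a}$. Its effect for outcome $\hat r$ is represented by the vector with $R(\mathbf{a}|\mathbf{x})=1$ if $r(\mathbf{a})=\hat r$ and $\mathbf{x}=\mathbf{x}(\mathbf{a})$ (the inputs used when outputs $\mathbf{a}$ occur), and $0$ otherwise. A measurement $\{(r,\mu_r)\}$ is a mixture of basic measurements if there are basic measurements $\{(r,\mu^{(j)}_r)\}$ and probabilities $q_j$ with $\mu_r=\sum_j q_j\mu^{(j)}_r$ for all $r$. *)

theory Defs
  imports Complex_Main "HOL-Library.FuncSet"
begin

text \<open>A system of m boxes, indexed 0..m-1. Box i has inputs {..<nx i} and outputs
 {..<na i}. Tuples of inputs/outputs are extensional functions on {..<m}.
 A state is a function p with p a x = p(a|x).\<close>

type_synonym tuple = "nat \<Rightarrow> nat"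
type_synonym state = "tuple \<Rightarrow> tuple \<Rightarrow> real"

definition outs :: "nat \<Rightarrow> (nat \<Rightarrow> nat) \<Rightarrow> tuple set" where
  "outs m na = PiE {..<m} (\<lambda>i. {..<na i})"

definition ins :: "nat \<Rightarrow> (nat \<Rightarrow> nat) \<Rightarrow> tuple set" where
  "ins m nx = PiE {..<m} (\<lambda>i. {..<nx i})"

definition is_state :: "nat \<Rightarrow> (nat \<Rightarrow> nat) \<Rightarrow> (nat \<Rightarrow> nat) \<Rightarrow> state \<Rightarrow> bool" where
  "is_state m nx na p \<longleftrightarrow>
     (\<forall>a\<in>outs m na. \<forall>x\<in>ins m nx. 0 \<le> p a x) \<and>
     (\<forall>x\<in>ins m nx. (\<Sum>a\<in>outs m na. p a x) = 1) \<and>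
     (\<forall>i<m. \<forall>x\<in>ins m nx. \<forall>y<nx i. \<forall>a\<in>outs m na.
        (\<Sum>b<na i. p (a(i := b)) x) = (\<Sum>b<na i. p (a(i := b)) (x(i := y))))"

definition states :: "nat \<Rightarrow> (nat \<Rightarrow> nat) \<Rightarrow> (nat \<Rightarrow> nat) \<Rightarrow> state set" where
  "states m nx na = {p. is_state m nx na p}"

definition is_effect :: "nat \<Rightarrow> (nat \<Rightarrow> nat) \<Rightarrow> (nat \<Rightarrow> nat) \<Rightarrow> (state \<Rightarrow> real) \<Rightarrow> bool" where
  "is_effect m nx na e \<longleftrightarrow>
     (\<exists>R :: tuple \<Rightarrow> tuple \<Rightarrow> real. \<forall>p\<in>states m nx na.
        e p = (\<Sum>a\<in>outs m na. \<Sum>x\<in>ins m nx. p a x * R a x)) \<and>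
     (\<forall>p\<in>states m nx na. 0 \<le> e p \<and> e p \<le> 1)"

definition is_measurement :: "nat \<Rightarrow> (nat \<Rightarrow> nat) \<Rightarrow> (nat \<Rightarrow> nat) \<Rightarrow> 'r set
    \<Rightarrow> ('r \<Rightarrow> state \<Rightarrow> real) \<Rightarrow> bool" where
  "is_measurement m nx na Out mu \<longleftrightarrow>
     finite Out \<and> (\<forall>r\<in>Out. is_effect m nx na (mu r)) \<and>
     (\<forall>p\<in>states m nx na. (\<Sum>r\<in>Out. mu r p) = 1)"

text \<open>Adaptive strategies. A history is a list of (box, input, output) triples.
 The strategy chooses the next (box, input) from the history so far.\<close>
type_synonym strategy = "(nat \<times> nat \<times> nat) list \<Rightarrow> nat \<times> nat"

fun run :: "strategy \<Rightarrow> tuple \<Rightarrow> nat \<Rightarrow> (nat \<times> nat \<times> nat) list" where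
  "run \<sigma> a 0 = []"
| "run \<sigma> a (Suc k) = (let h = run \<sigma> a k in h @ [(fst (\<sigma> h), snd (\<sigma> h), a (fst (\<sigma> h)))])"

definition valid_strategy :: "nat \<Rightarrow> (nat \<Rightarrow> nat) \<Rightarrow> (nat \<Rightarrow> nat) \<Rightarrow> strategy \<Rightarrow> bool" where
  "valid_strategy m nx na \<sigma> \<longleftrightarrow>
     (\<forall>a\<in>outs m na. \<forall>k<m. let h = run \<sigma> a k in
        fst (\<sigma> h) < m \<and> fst (\<sigma> h) \<notin> fst ` set h \<and> snd (\<sigma> h) < nx (fst (\<sigma> h)))"

definition input_at :: "(nat \<times> nat \<times> nat) list \<Rightarrow> nat \<Rightarrow> nat" where
  "input_at h i = fst (snd (hd (filter (\<lambda>e. fst e = i) h)))"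

definition inputs_used :: "nat \<Rightarrow> strategy \<Rightarrow> tuple \<Rightarrow> tuple" where
  "inputs_used m \<sigma> a = restrict (input_at (run \<sigma> a m)) {..<m}"

definition basic_effect :: "nat \<Rightarrow> (nat \<Rightarrow> nat) \<Rightarrow> (nat \<Rightarrow> nat) \<Rightarrow> strategy
    \<Rightarrow> (tuple \<Rightarrow> 'r) \<Rightarrow> 'r \<Rightarrow> state \<Rightarrow> real" where
  "basic_effect m nx na \<sigma> rf r p =
     (\<Sum>a\<in>outs m na. \<Sum>x\<in>ins m nx.
        p a x * (if rf a = r \<and> x = inputs_used m \<sigma> a then 1 else 0))"

definition is_basic_measurement :: "nat \<Rightarrow> (nat \<Rightarrow> nat) \<Rightarrow> (nat \<Rightarrow> nat) \<Rightarrow> 'r set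
    \<Rightarrow> ('r \<Rightarrow> state \<Rightarrow> real) \<Rightarrow> bool" where
  "is_basic_measurement m nx na Out mu \<longleftrightarrow>
     (\<exists>\<sigma> (rf :: tuple \<Rightarrow> 'r). valid_strategy m nx na \<sigma> \<and> (\<forall>a\<in>outs m na. rf a \<in> Out) \<and>
        (\<forall>r\<in>Out. \<forall>p\<in>states m nx na. mu r p = basic_effect m nx na \<sigma> rf r p))"

definition is_mixture_of_basic :: "nat \<Rightarrow> (nat \<Rightarrow> nat) \<Rightarrow> (nat \<Rightarrow> nat) \<Rightarrow> 'r set
    \<Rightarrow> ('r \<Rightarrow> state \<Rightarrow> real) \<Rightarrow> bool" where
  "is_mixture_of_basic m nx na Out mu \<longleftrightarrow>
     (\<exists>(k::nat) (q :: nat \<Rightarrow> real) (M :: nat \<Rightarrow> 'r \<Rightarrow> state \<Rightarrow> real).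
        (\<forall>j<k. 0 \<le> q j) \<and> (\<Sum>j<k. q j) = 1 \<and>
        (\<forall>j<k. is_basic_measurement m nx na Out (M j)) \<and>
        (\<forall>r\<in>Out. \<forall>p\<in>states m nx na. mu r p = (\<Sum>j<k. q j * M j r p)))"

end

theory Submission
  imports Defs "HOL-Library.Nat_Bijection"
begin


lemma interval_choice:
  fixes l u :: "nat \<Rightarrow> real"
  assumes "finite P" "finite N" "\<And>p q. p \<in> P \<Longrightarrow> q \<in> N \<Longrightarrow> l q \<le> u p"
  shows "\<exists>t. (\<forall>q\<in>N. l q \<le> t) \<and> (\<forall>p\<in>P. t \<le> u p)"
proof (cases "P = {}")
  case True
  show ?thesis
    by (rule exI[of _ "Max (insert 0 (l ` N))"]) (use True assms in auto)
next
  case False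
  have "Min (u ` P) \<in> u ` P" using False assms(1) by (intro Min_in) auto
  then obtain p0 where p0: "p0 \<in> P" "u p0 = Min (u ` P)" by auto
  have le: "u p0 \<le> u p" if "p \<in> P" for p
    using p0(2) Min_le[OF finite_imageI[OF assms(1)], of "u p"] that by simp
  show ?thesis
    by (rule exI[of _ "u p0"]) (use p0(1) assms(3) le in auto)
qed

definition comb :: "(nat \<Rightarrow> real) \<Rightarrow> (nat \<Rightarrow> real) \<Rightarrow> nat \<Rightarrow> real" where
  "comb c g r = (if even r then g (r div 2) else
      (case prod_decode (r div 2) of (p, q) \<Rightarrow> (- c q) * g p + c p * g q))"

lemma comb_identity:
  fixes c w' g :: "nat \<Rightarrow> real"
  assumes fin: "finite Rw"
  defines "P \<equiv> {i\<in>Rw. c i > 0}" and "N \<equiv> {i\<in>Rw. c i < 0}" and "Z \<equiv> {i\<in>Rw. c i = 0}"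
  defines "Rw' \<equiv> (\<lambda>i. 2*i) ` Z \<union> (\<lambda>(p,q). 2 * prod_encode (p,q) + 1) ` (P \<times> N)"
  defines "w \<equiv> (\<lambda>i. if i \<in> Z then w' (2*i) else if i \<in> P then (\<Sum>q\<in>N. w' (2 * prod_encode (i,q) + 1) * (- c q))
      else if i \<in> N then (\<Sum>p\<in>P. w' (2 * prod_encode (p,i) + 1) * c p) else 0)"
  shows "(\<Sum>i\<in>Rw. w i * g i) = (\<Sum>r\<in>Rw'. w' r * comb c g r)"
proof -
  have finP: "finite P" "finite N" "finite Z" using fin by (auto simp: P_def N_def Z_def)
  have Rw: "Rw = Z \<union> (P \<union> N)" by (auto simp: P_def N_def Z_def)
  have disj: "Z \<inter> (P \<union> N) = {}" "P \<inter> N = {}" by (auto simp: P_def N_def Z_def)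
  have "(\<Sum>i\<in>Rw. w i * g i) = (\<Sum>i\<in>Z. w i * g i) + ((\<Sum>i\<in>P. w i * g i) + (\<Sum>i\<in>N. w i * g i))"
    unfolding Rw using finP disj by (simp add: sum.union_disjoint)
  also have "(\<Sum>i\<in>Z. w i * g i) = (\<Sum>i\<in>Z. w' (2*i) * g i)"
    by (rule sum.cong) (auto simp: w_def)
  also have "(\<Sum>i\<in>P. w i * g i) = (\<Sum>p\<in>P. \<Sum>q\<in>N. w' (2 * prod_encode (p,q) + 1) * (- c q) * g p)"
    by (rule sum.cong) (auto simp: w_def sum_distrib_right disj P_def Z_def)
  also have "(\<Sum>i\<in>N. w i * g i) = (\<Sum>q\<in>N. \<Sum>p\<in>P. w' (2 * prod_encode (p,q) + 1) * c p * g q)"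
    by (rule sum.cong) (auto simp: w_def sum_distrib_right N_def P_def Z_def)
  also have "\<dots> = (\<Sum>p\<in>P. \<Sum>q\<in>N. w' (2 * prod_encode (p,q) + 1) * c p * g q)"
    by (rule sum.swap)
  finally have L: "(\<Sum>i\<in>Rw. w i * g i) = (\<Sum>i\<in>Z. w' (2*i) * g i) +
      (\<Sum>(p,q)\<in>P\<times>N. w' (2 * prod_encode (p,q) + 1) * comb c g (2 * prod_encode (p,q) + 1))"
    by (simp add: sum.cartesian_product[symmetric] comb_def sum.distrib[symmetric] algebra_simps)
  have inj1: "inj_on (\<lambda>i. 2*i) Z" by (auto simp: inj_on_def)
  have inj2: "inj_on (\<lambda>(p,q). 2 * prod_encode (p,q) + 1) (P \<times> N)"
    by (auto simp: inj_on_def prod_encode_eq)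
  have dj: "(\<lambda>i. 2*i) ` Z \<inter> (\<lambda>(p,q). 2 * prod_encode (p,q) + 1) ` (P \<times> N) = {}"
    by auto presburger
  have "(\<Sum>r\<in>Rw'. w' r * comb c g r) = (\<Sum>r\<in>(\<lambda>i. 2*i) ` Z. w' r * comb c g r) +
      (\<Sum>r\<in>(\<lambda>(p,q). 2 * prod_encode (p,q) + 1) ` (P \<times> N). w' r * comb c g r)"
    unfolding Rw'_def using finP dj by (simp add: sum.union_disjoint)
  also have "\<dots> = (\<Sum>i\<in>Z. w' (2*i) * g i) +
      (\<Sum>(p,q)\<in>P\<times>N. w' (2 * prod_encode (p,q) + 1) * comb c g (2 * prod_encode (p,q) + 1))"
  proof -
    have a: "(\<Sum>r\<in>(\<lambda>i. 2*i) ` Z. w' r * comb c g r) = (\<Sum>i\<in>Z. w' (2*i) * g i)"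
      by (simp add: sum.reindex[OF inj1] comb_def)
    have b: "(\<Sum>r\<in>(\<lambda>(p,q). 2 * prod_encode (p,q) + 1) ` (P \<times> N). w' r * comb c g r)
       = (\<Sum>x\<in>P \<times> N. w' ((\<lambda>(p,q). 2 * prod_encode (p,q) + 1) x) * comb c g ((\<lambda>(p,q). 2 * prod_encode (p,q) + 1) x))"
      using sum.reindex[OF inj2, of "\<lambda>r. w' r * comb c g r"] by (simp add: comp_def)
    show ?thesis unfolding a b by (simp add: case_prod_unfold)
  qed
  finally show ?thesis using L by simp
qed

lemma fm_farkas:
  fixes M :: "nat \<Rightarrow> 'v \<Rightarrow> real" and h :: "nat \<Rightarrow> real"
  assumes "finite J" "finite Rw" "\<not>(\<exists>z. \<forall>i\<in>Rw. (\<Sum>j\<in>J. M i j * z j) \<le> h i)"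
  shows "\<exists>w. (\<forall>i\<in>Rw. 0 \<le> w i) \<and> (\<forall>j\<in>J. (\<Sum>i\<in>Rw. w i * M i j) = 0) \<and> (\<Sum>i\<in>Rw. w i * h i) < 0"
  using assms
proof (induction J arbitrary: M h Rw rule: finite_induct)
  case empty
  then obtain i where i: "i \<in> Rw" "h i < 0" by force
  have "(\<Sum>i'\<in>Rw. (if i' = i then 1 else 0) * h i') = (\<Sum>i'\<in>Rw. if i' = i then h i else 0)"
    by (rule sum.cong) auto
  also have "\<dots> = h i" using i empty by simp
  finally have "(\<Sum>i'\<in>Rw. (if i' = i then 1 else 0) * h i') = h i" .
  then show ?case
    by (intro exI[of _ "\<lambda>i'. if i' = i then 1 else 0"]) (use i in auto)
next
  case (insert k J)
  define c where "c = (\<lambda>i. M i k)"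
  define P where "P = {i\<in>Rw. c i > 0}"
  define N where "N = {i\<in>Rw. c i < 0}"
  define Z where "Z = {i\<in>Rw. c i = 0}"
  define Rw' where "Rw' = (\<lambda>i. 2*i) ` Z \<union> (\<lambda>(p,q). 2 * prod_encode (p,q) + 1) ` (P \<times> N)"
  define M' where "M' = (\<lambda>r j. comb c (\<lambda>i. M i j) r)"
  define h' where "h' = comb c h"
  have finP: "finite P" "finite N" "finite Z" using insert by (auto simp: P_def N_def Z_def)
  have finR: "finite Rw'" using finP by (simp add: Rw'_def)
  have infeas: "\<not>(\<exists>z. \<forall>r\<in>Rw'. (\<Sum>j\<in>J. M' r j * z j) \<le> h' r)"
  proof
    assume "\<exists>z. \<forall>r\<in>Rw'. (\<Sum>j\<in>J. M' r j * z j) \<le> h' r"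
    then obtain z where z: "\<And>r. r \<in> Rw' \<Longrightarrow> (\<Sum>j\<in>J. M' r j * z j) \<le> h' r" by blast
    define s where "s = (\<lambda>i. \<Sum>j\<in>J. M i j * z j)"
    have sZ: "s i \<le> h i" if "i \<in> Z" for i
    proof -
      have "2*i \<in> Rw'" using that by (auto simp: Rw'_def)
      from z[OF this] show ?thesis by (simp add: M'_def h'_def comb_def s_def)
    qed
    have sPN: "(- c q) * s p + c p * s q \<le> (- c q) * h p + c p * h q" if "p \<in> P" "q \<in> N" for p q
    proof -
      have "2 * prod_encode (p,q) + 1 \<in> Rw'" using that by (auto simp: Rw'_def)
      from z[OF this] show ?thesis
        by (simp add: M'_def h'_def comb_def s_def sum_distrib_left sum_subtractf algebra_simps sum_distrib_right sum_negf)
    qed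
    obtain t where t: "\<forall>q\<in>N. (s q - h q) / (- c q) \<le> t" "\<forall>p\<in>P. t \<le> (h p - s p) / c p"
    proof -
      have "\<exists>t. (\<forall>q\<in>N. (s q - h q) / (- c q) \<le> t) \<and> (\<forall>p\<in>P. t \<le> (h p - s p) / c p)"
      proof (rule interval_choice[OF finP(1,2)])
        fix p q assume pq: "p \<in> P" "q \<in> N"
        have cp: "c p > 0" and cq: "c q < 0" using pq by (auto simp: P_def N_def)
        show "(s q - h q) / (- c q) \<le> (h p - s p) / c p"
          using sPN[OF pq] cp cq by (simp add: divide_simps) (simp add: algebra_simps)
      qed
      then show ?thesis using that by blast
    qed
    have "\<forall>i\<in>Rw. (\<Sum>j\<in>insert k J. M i j * (z(k := t)) j) \<le> h i"
    proof
      fix i assume i: "i \<in> Rw"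
      have eq: "(\<Sum>j\<in>insert k J. M i j * (z(k := t)) j) = c i * t + s i"
        using insert(1,2) by (simp add: c_def s_def) (rule sum.cong, auto)
      have "i \<in> Z \<or> i \<in> P \<or> i \<in> N" using i by (auto simp: Z_def P_def N_def)
      moreover have "c i * t + s i \<le> h i" if "i \<in> Z" using sZ[OF that] that by (simp add: Z_def)
      moreover have "c i * t + s i \<le> h i" if "i \<in> P"
        using t(2) that by (auto simp: P_def pos_le_divide_eq algebra_simps)
      moreover have "c i * t + s i \<le> h i" if "i \<in> N"
      proof -
        have ci: "- c i > 0" using that by (simp add: N_def)
        have "(s i - h i) / (- c i) \<le> t" using t(1) that by blast
        then have "s i - h i \<le> t * (- c i)" using ci pos_divide_le_eq[OF ci, of "s i - h i" t] by linarith
        then show ?thesis by (simp add: algebra_simps)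
      qed
      ultimately show "(\<Sum>j\<in>insert k J. M i j * (z(k := t)) j) \<le> h i" using eq by auto
    qed
    then show False using insert(5) by blast
  qed
  obtain w' where w': "\<forall>r\<in>Rw'. 0 \<le> w' r" "\<forall>j\<in>J. (\<Sum>r\<in>Rw'. w' r * M' r j) = 0" "(\<Sum>r\<in>Rw'. w' r * h' r) < 0"
    using insert(3)[OF finR infeas] by blast
  define w where "w \<equiv> (\<lambda>i. if i \<in> Z then w' (2*i) else if i \<in> P then (\<Sum>q\<in>N. w' (2 * prod_encode (i,q) + 1) * (- c q))
      else if i \<in> N then (\<Sum>p\<in>P. w' (2 * prod_encode (p,i) + 1) * c p) else 0)"
  have ident: "\<And>g. (\<Sum>i\<in>Rw. w i * g i) = (\<Sum>r\<in>Rw'. w' r * comb c g r)"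
    unfolding w_def Rw'_def P_def N_def Z_def by (rule comb_identity[OF insert(4)])
  show ?case
  proof (intro exI conjI ballI)
    fix i assume i: "i \<in> Rw"
    show "0 \<le> w i"
    proof -
      have a: "\<And>r. r \<in> Rw' \<Longrightarrow> 0 \<le> w' r" using w'(1) by blast
      consider "i \<in> Z" | "i \<notin> Z" "i \<in> P" | "i \<notin> Z" "i \<notin> P" "i \<in> N" | "i \<notin> Z" "i \<notin> P" "i \<notin> N" by blast
      then show ?thesis
      proof cases
        case 1
        then have "2*i \<in> Rw'" by (auto simp: Rw'_def)
        then show ?thesis using 1 a by (simp add: w_def)
      next
        case 2
        have "0 \<le> w' (2 * prod_encode (i,q) + 1) * (- c q)" if q: "q \<in> N" for q
        proof -
          have "2 * prod_encode (i,q) + 1 \<in> Rw'" using 2 q by (auto simp: Rw'_def)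
          then have "0 \<le> w' (2 * prod_encode (i,q) + 1)" using a by blast
          moreover have "0 \<le> - c q" using q by (simp add: N_def)
          ultimately show ?thesis by (simp add: mult_nonneg_nonpos)
        qed
        then show ?thesis using 2 by (simp add: w_def sum_nonneg)
      next
        case 3
        have "0 \<le> w' (2 * prod_encode (p,i) + 1) * c p" if p: "p \<in> P" for p
        proof -
          have "2 * prod_encode (p,i) + 1 \<in> Rw'" using 3 p by (auto simp: Rw'_def)
          then have "0 \<le> w' (2 * prod_encode (p,i) + 1)" using a by blast
          moreover have "0 \<le> c p" using p by (simp add: P_def)
          ultimately show ?thesis by simp
        qed
        then show ?thesis using 3 by (simp add: w_def sum_nonneg)
      next
        case 4 then show ?thesis by (simp add: w_def)
      qed
    qed
  next
    fix j assume j: "j \<in> insert k J"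
    show "(\<Sum>i\<in>Rw. w i * M i j) = 0"
    proof (cases "j = k")
      case True
      have "\<And>r. r \<in> Rw' \<Longrightarrow> comb c (\<lambda>i. M i j) r = 0"
        using True by (auto simp: Rw'_def comb_def Z_def c_def)
      then show ?thesis using ident[of "\<lambda>i. M i j"] by simp
    next
      case False
      then have "j \<in> J" using j by simp
      then show ?thesis using ident[of "\<lambda>i. M i j"] w'(2) by (simp add: M'_def)
    qed
  next
    show "(\<Sum>i\<in>Rw. w i * h i) < 0" using ident[of h] w'(3) by (simp add: h'_def)
  qed
qed


lemma finite_outs: "finite (outs m na)" by (simp add: outs_def finite_PiE)
lemma finite_ins: "finite (ins m nx)" by (simp add: ins_def finite_PiE)

lemma upd_outs: "a \<in> outs m na \<Longrightarrow> i < m \<Longrightarrow> b < na i \<Longrightarrow> a(i := b) \<in> outs m na"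
  by (auto simp: outs_def PiE_iff extensional_def)
lemma upd_ins: "x \<in> ins m nx \<Longrightarrow> i < m \<Longrightarrow> y < nx i \<Longrightarrow> x(i := y) \<in> ins m nx"
  by (auto simp: ins_def PiE_iff extensional_def)

lemma sum_upd_as_ind:
  fixes p :: "tuple \<Rightarrow> real"
  assumes "a \<in> outs m na" "i < m"
  shows "(\<Sum>b<na i. p (a(i := b))) = (\<Sum>a'\<in>outs m na. p a' * (if a' \<in> (\<lambda>b. a(i:=b)) ` {..<na i} then 1 else 0))"
proof -
  have inj: "inj_on (\<lambda>b. a(i:=b)) {..<na i}" by (auto simp: inj_on_def) (metis fun_upd_same)
  have sub: "(\<lambda>b. a(i:=b)) ` {..<na i} \<subseteq> outs m na" using assms upd_outs by blast
  have "(\<Sum>b<na i. p (a(i := b))) = (\<Sum>a'\<in>(\<lambda>b. a(i:=b)) ` {..<na i}. p a')"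
    by (simp add: sum.reindex[OF inj])
  also have "\<dots> = (\<Sum>a'\<in>outs m na. if a' \<in> (\<lambda>b. a(i:=b)) ` {..<na i} then p a' else 0)"
    using sub finite_outs by (simp add: sum.If_cases Int_absorb1)
  finally show ?thesis by (simp add: if_distrib cong: if_cong)
qed

lemma sum_ind_x:
  fixes p :: "tuple \<Rightarrow> tuple \<Rightarrow> real"
  assumes "x0 \<in> ins m nx"
  shows "(\<Sum>a\<in>outs m na. \<Sum>x\<in>ins m nx. p a x * ((if x = x0 then 1 else 0) * f a)) = (\<Sum>a\<in>outs m na. p a x0 * f a)"
proof (rule sum.cong[OF refl])
  fix a
  have "(\<Sum>x\<in>ins m nx. p a x * ((if x = x0 then 1 else 0) * f a)) = (\<Sum>x\<in>ins m nx. if x = x0 then p a x0 * f a else 0)"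
    by (rule sum.cong) auto
  also have "\<dots> = p a x0 * f a" using assms finite_ins by simp
  finally show "(\<Sum>x\<in>ins m nx. p a x * ((if x = x0 then 1 else 0) * f a)) = p a x0 * f a" .
qed

definition nscoef :: "nat \<Rightarrow> (nat \<Rightarrow> nat) \<Rightarrow> (nat \<times> tuple \<times> nat \<times> tuple) + tuple \<Rightarrow> tuple \<Rightarrow> tuple \<Rightarrow> real" where
  "nscoef m na v a' x' = (case v of
      Inl (i, x, y, a) \<Rightarrow> ((if x' = x then 1 else 0) - (if x' = x(i := y) then 1 else 0)) *
            (if a' \<in> (\<lambda>b. a(i:=b)) ` {..<na i} then 1 else 0)
    | Inr x \<Rightarrow> (if x' = x then 1 else 0))"

definition nsvars :: "nat \<Rightarrow> (nat \<Rightarrow> nat) \<Rightarrow> (nat \<Rightarrow> nat) \<Rightarrow> ((nat \<times> tuple \<times> nat \<times> tuple) + tuple) set" where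
  "nsvars m nx na = Inl ` (SIGMA i:{..<m}. SIGMA x:ins m nx. SIGMA y:{..<nx i}. outs m na) \<union> Inr ` ins m nx"

lemma finite_nsvars: "finite (nsvars m nx na)"
  unfolding nsvars_def using finite_outs finite_ins by (auto intro!: finite_SigmaI)

lemma nscoef_Inl_sum:
  fixes p :: "tuple \<Rightarrow> tuple \<Rightarrow> real"
  assumes "i < m" "x \<in> ins m nx" "y < nx i" "a \<in> outs m na"
  shows "(\<Sum>a'\<in>outs m na. \<Sum>x'\<in>ins m nx. p a' x' * nscoef m na (Inl (i,x,y,a)) a' x')
     = (\<Sum>b<na i. p (a(i:=b)) x) - (\<Sum>b<na i. p (a(i:=b)) (x(i:=y)))"
proof -
  let ?A = "(\<lambda>b. a(i:=b)) ` {..<na i}"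
  have "(\<Sum>a'\<in>outs m na. \<Sum>x'\<in>ins m nx. p a' x' * nscoef m na (Inl (i,x,y,a)) a' x')
      = (\<Sum>a'\<in>outs m na. \<Sum>x'\<in>ins m nx. p a' x' * ((if x' = x then 1 else 0) * (if a' \<in> ?A then 1 else 0))
         - p a' x' * ((if x' = x(i:=y) then 1 else 0) * (if a' \<in> ?A then 1 else 0)))"
    by (simp add: nscoef_def algebra_simps)
  also have "\<dots> = (\<Sum>a'\<in>outs m na. p a' x * (if a' \<in> ?A then 1 else 0)) - (\<Sum>a'\<in>outs m na. p a' (x(i:=y)) * (if a' \<in> ?A then 1 else 0))"
    using sum_ind_x[OF assms(2), of p] sum_ind_x[OF upd_ins[OF assms(2,1,3)], of p]
    by (simp add: sum_subtractf)
  also have "\<dots> = (\<Sum>b<na i. p (a(i:=b)) x) - (\<Sum>b<na i. p (a(i:=b)) (x(i:=y)))"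
    using sum_upd_as_ind[OF assms(4,1), of "\<lambda>a'. p a' x"] sum_upd_as_ind[OF assms(4,1), of "\<lambda>a'. p a' (x(i:=y))"]
    by simp
  finally show ?thesis .
qed

lemma nscoef_Inr_sum:
  fixes p :: "tuple \<Rightarrow> tuple \<Rightarrow> real"
  assumes "x \<in> ins m nx"
  shows "(\<Sum>a'\<in>outs m na. \<Sum>x'\<in>ins m nx. p a' x' * nscoef m na (Inr x) a' x') = (\<Sum>a'\<in>outs m na. p a' x)"
  using sum_ind_x[OF assms, of p "\<lambda>_. 1"] by (simp add: nscoef_def)

lemma state_nscoef_sum:
  assumes "p \<in> states m nx na" "v \<in> nsvars m nx na"
  shows "(\<Sum>a'\<in>outs m na. \<Sum>x'\<in>ins m nx. p a' x' * nscoef m na v a' x') = (case v of Inl _ \<Rightarrow> 0 | Inr _ \<Rightarrow> 1)"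
  using assms nscoef_Inl_sum nscoef_Inr_sum
  by (auto simp: nsvars_def states_def is_state_def)


lemma nonneg_rep:
  fixes e :: "state \<Rightarrow> real" and R :: "tuple \<Rightarrow> tuple \<Rightarrow> real"
  assumes rep: "\<forall>p\<in>states m nx na. e p = (\<Sum>a\<in>outs m na. \<Sum>x\<in>ins m nx. p a x * R a x)"
    and pos: "\<forall>p\<in>states m nx na. 0 \<le> e p"
  shows "\<exists>R'. (\<forall>a\<in>outs m na. \<forall>x\<in>ins m nx. 0 \<le> R' a x) \<and>
     (\<forall>p\<in>states m nx na. e p = (\<Sum>a\<in>outs m na. \<Sum>x\<in>ins m nx. p a x * R' a x))"
proof -
  define I where "I = outs m na \<times> ins m nx"
  define K where "K = card I"
  have finI: "finite I" using finite_outs finite_ins by (simp add: I_def)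
  obtain ix where ix: "bij_betw ix {0..<K} I" using ex_bij_betw_nat_finite[OF finI] K_def by blast
  have ix': "bij_betw ix {..<K} I" using ix by (simp add: atLeast0LessThan)
  define J where "J = nsvars m nx na"
  have finJ: "finite J" by (simp add: J_def finite_nsvars)
  define M where "M = (\<lambda>r v. if r < K then - nscoef m na v (fst (ix r)) (snd (ix r))
     else if r = K then (case v of Inr _ \<Rightarrow> 1 | _ \<Rightarrow> 0) else (case v of Inr _ \<Rightarrow> -1 | _ \<Rightarrow> (0::real)))"
  define h where "h = (\<lambda>r. if r < K then R (fst (ix r)) (snd (ix r)) else 0)"
  define Rw where "Rw = {..<Suc (Suc K)}"
  have sumI: "(\<Sum>r<K. g (ix r)) = (\<Sum>a\<in>outs m na. \<Sum>x\<in>ins m nx. g (a, x))" for g :: "tuple \<times> tuple \<Rightarrow> real"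
  proof -
    have "(\<Sum>r<K. g (ix r)) = (\<Sum>i\<in>I. g i)" using sum.reindex_bij_betw[OF ix', of g] by simp
    also have "\<dots> = (\<Sum>a\<in>outs m na. \<Sum>x\<in>ins m nx. g (a, x))"
      unfolding I_def by (simp add: sum.cartesian_product)
    finally show ?thesis .
  qed
  show ?thesis
  proof (cases "\<exists>z. \<forall>r\<in>Rw. (\<Sum>v\<in>J. M r v * z v) \<le> h r")
    case True
    then obtain z where z: "\<And>r. r \<in> Rw \<Longrightarrow> (\<Sum>v\<in>J. M r v * z v) \<le> h r" by blast
    define R' where "R' = (\<lambda>a x. R a x + (\<Sum>v\<in>J. z v * nscoef m na v a x))"
    define S where "S = (\<Sum>v\<in>J. (case v of Inr _ \<Rightarrow> 1 | _ \<Rightarrow> 0) * z v)"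
    have MK: "M K v = (case v of Inr _ \<Rightarrow> 1 | _ \<Rightarrow> 0)" for v by (simp add: M_def split: sum.splits)
    have MK1: "M (Suc K) v = - (case v of Inr _ \<Rightarrow> 1 | _ \<Rightarrow> 0)" for v by (simp add: M_def split: sum.splits)
    have "S \<le> 0" using z[of K] by (simp add: Rw_def MK h_def S_def)
    moreover have "- S \<le> 0"
    proof -
      have "(\<Sum>v\<in>J. M (Suc K) v * z v) = (\<Sum>v\<in>J. - ((case v of Inr _ \<Rightarrow> 1 | _ \<Rightarrow> 0) * z v))"
        by (simp add: MK1)
      also have "\<dots> = - S" by (simp add: S_def sum_negf)
      finally show ?thesis using z[of "Suc K"] by (simp add: Rw_def h_def)
    qed
    ultimately have S0: "S = 0" by simp
    show ?thesis
    proof (intro exI conjI ballI)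
      fix a x assume ax: "a \<in> outs m na" "x \<in> ins m nx"
      then have "(a, x) \<in> I" by (simp add: I_def)
      then obtain r where r: "r < K" "ix r = (a, x)" using ix' by (auto simp: bij_betw_def)
      then have "r \<in> Rw" by (simp add: Rw_def)
      from z[OF this] r show "0 \<le> R' a x"
        by (simp add: M_def h_def R'_def sum_negf mult.commute)
    next
      fix p assume p: "p \<in> states m nx na"
      have "(\<Sum>a\<in>outs m na. \<Sum>x\<in>ins m nx. p a x * R' a x) =
        (\<Sum>a\<in>outs m na. \<Sum>x\<in>ins m nx. p a x * R a x) +
        (\<Sum>v\<in>J. z v * (\<Sum>a\<in>outs m na. \<Sum>x\<in>ins m nx. p a x * nscoef m na v a x))"
      proof -
        have "(\<Sum>a\<in>outs m na. \<Sum>x\<in>ins m nx. p a x * R' a x) =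
          (\<Sum>a\<in>outs m na. \<Sum>x\<in>ins m nx. p a x * R a x) +
          (\<Sum>a\<in>outs m na. \<Sum>x\<in>ins m nx. \<Sum>v\<in>J. z v * (p a x * nscoef m na v a x))"
          by (simp add: R'_def distrib_left sum.distrib sum_distrib_left mult.left_commute)
        also have "(\<Sum>a\<in>outs m na. \<Sum>x\<in>ins m nx. \<Sum>v\<in>J. z v * (p a x * nscoef m na v a x))
           = (\<Sum>a\<in>outs m na. \<Sum>v\<in>J. \<Sum>x\<in>ins m nx. z v * (p a x * nscoef m na v a x))"
          by (rule sum.cong[OF refl], rule sum.swap)
        also have "\<dots> = (\<Sum>v\<in>J. \<Sum>a\<in>outs m na. \<Sum>x\<in>ins m nx. z v * (p a x * nscoef m na v a x))"
          by (rule sum.swap)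
        also have "\<dots> = (\<Sum>v\<in>J. z v * (\<Sum>a\<in>outs m na. \<Sum>x\<in>ins m nx. p a x * nscoef m na v a x))"
          by (simp add: sum_distrib_left)
        finally show ?thesis .
      qed
      also have "(\<Sum>v\<in>J. z v * (\<Sum>a\<in>outs m na. \<Sum>x\<in>ins m nx. p a x * nscoef m na v a x)) = S"
        unfolding S_def
        by (rule sum.cong[OF refl]) (use p state_nscoef_sum[OF p] in \<open>auto simp: J_def split: sum.splits\<close>)
      finally show "e p = (\<Sum>a\<in>outs m na. \<Sum>x\<in>ins m nx. p a x * R' a x)" using rep p S0 by simp
    qed
  next
    case False
    obtain w where w: "\<forall>r\<in>Rw. 0 \<le> w r" "\<forall>v\<in>J. (\<Sum>r\<in>Rw. w r * M r v) = 0" "(\<Sum>r\<in>Rw. w r * h r) < 0"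
      using fm_farkas[OF finJ _ False] by (auto simp: Rw_def)
    define q where "q = (\<lambda>a x. w (inv_into {..<K} ix (a, x)))"
    have wq: "w r = q (fst (ix r)) (snd (ix r))" if "r < K" for r
      using that ix' by (simp add: q_def bij_betw_def inv_into_f_f)
    have conv: "(\<Sum>r<K. w r * g (ix r)) = (\<Sum>a\<in>outs m na. \<Sum>x\<in>ins m nx. q a x * g (a, x))" for g
    proof -
      have "(\<Sum>r<K. w r * g (ix r)) = (\<Sum>r<K. (\<lambda>i. q (fst i) (snd i) * g i) (ix r))"
        by (rule sum.cong) (auto simp: wq)
      then show ?thesis using sumI[of "\<lambda>i. q (fst i) (snd i) * g i"] by simp
    qed
    have qnn: "0 \<le> q a x" if "a \<in> outs m na" "x \<in> ins m nx" for a x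
    proof -
      have "(a, x) \<in> I" using that by (simp add: I_def)
      then obtain r where r: "r < K" "ix r = (a, x)" using ix' by (auto simp: bij_betw_def)
      have "0 \<le> w r" using w(1) r(1) by (simp add: Rw_def)
      then show ?thesis using wq[OF r(1)] r(2) by simp
    qed
    have sumRw: "(\<Sum>r\<in>Rw. f r) = (\<Sum>r<K. f r) + f K + f (Suc K)" for f :: "nat \<Rightarrow> real"
      by (simp add: Rw_def)
    have neg: "(\<Sum>a\<in>outs m na. \<Sum>x\<in>ins m nx. q a x * R a x) < 0"
      using w(3) unfolding sumRw using conv[of "\<lambda>i. R (fst i) (snd i)"] by (simp add: h_def)
    define lam where "lam = w K - w (Suc K)"
    have NS: "(\<Sum>a'\<in>outs m na. \<Sum>x'\<in>ins m nx. q a' x' * nscoef m na v a' x') = 0" if "v \<in> J" "isl v" for v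
    proof -
      have "0 = (\<Sum>r\<in>Rw. w r * M r v)" using w(2) that by simp
      also have "\<dots> = - (\<Sum>a'\<in>outs m na. \<Sum>x'\<in>ins m nx. q a' x' * nscoef m na v a' x')"
        unfolding sumRw using conv[of "\<lambda>i. - nscoef m na v (fst i) (snd i)"] that
        by (cases v) (auto simp: M_def sum_negf)
      finally show ?thesis by simp
    qed
    have NORM: "(\<Sum>a\<in>outs m na. q a x) = lam" if "x \<in> ins m nx" for x
    proof -
      have "Inr x \<in> J" using that by (simp add: J_def nsvars_def)
      then have "0 = (\<Sum>r\<in>Rw. w r * M r (Inr x))" using w(2) by simp
      also have "\<dots> = - (\<Sum>a'\<in>outs m na. \<Sum>x'\<in>ins m nx. q a' x' * nscoef m na (Inr x) a' x') + lam"
        unfolding sumRw using conv[of "\<lambda>i. - nscoef m na (Inr x) (fst i) (snd i)"]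
        by (simp add: M_def sum_negf lam_def)
      finally show ?thesis using nscoef_Inr_sum[OF that, of q] by simp
    qed
    show ?thesis
    proof (cases "lam > 0")
      case True
      define p where "p = (\<lambda>a x. q a x / lam)"
      have "p \<in> states m nx na"
        unfolding states_def is_state_def mem_Collect_eq
      proof (intro conjI ballI allI impI)
        fix a x assume "a \<in> outs m na" "x \<in> ins m nx"
        then show "0 \<le> p a x" using qnn True by (simp add: p_def)
      next
        fix x assume "x \<in> ins m nx"
        then show "(\<Sum>a\<in>outs m na. p a x) = 1" using NORM True by (simp add: p_def sum_divide_distrib[symmetric])
      next
        fix i x y a assume h: "i < m" "x \<in> ins m nx" "y < nx i" "a \<in> outs m na"
        have "Inl (i, x, y, a) \<in> J" using h by (simp add: J_def nsvars_def)
        from NS[OF this] nscoef_Inl_sum[OF h, of q]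
        have "(\<Sum>b<na i. q (a(i := b)) x) = (\<Sum>b<na i. q (a(i := b)) (x(i := y)))" by simp
        then show "(\<Sum>b<na i. p (a(i := b)) x) = (\<Sum>b<na i. p (a(i := b)) (x(i := y)))"
          by (simp add: p_def sum_divide_distrib[symmetric])
      qed
      moreover have "(\<Sum>a\<in>outs m na. \<Sum>x\<in>ins m nx. p a x * R a x) < 0"
      proof -
        have "(\<Sum>a\<in>outs m na. \<Sum>x\<in>ins m nx. p a x * R a x) = (\<Sum>a\<in>outs m na. \<Sum>x\<in>ins m nx. q a x * R a x) / lam"
          by (simp add: p_def sum_divide_distrib)
        then show ?thesis using neg True by (simp add: divide_neg_pos)
      qed
      ultimately show ?thesis using rep pos by fastforce
    next
      case False
      have "q a x = 0" if "a \<in> outs m na" "x \<in> ins m nx" for a x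
      proof -
        have "(\<Sum>a\<in>outs m na. q a x) \<le> 0" using NORM[OF that(2)] False by simp
        moreover have "\<forall>a\<in>outs m na. 0 \<le> q a x" using qnn that(2) by blast
        moreover have "0 \<le> (\<Sum>a\<in>outs m na. q a x)" using qnn that(2) by (simp add: sum_nonneg)
        ultimately have "(\<Sum>a\<in>outs m na. q a x) = 0" by linarith
        moreover have nn: "\<And>a. a \<in> outs m na \<Longrightarrow> 0 \<le> q a x" using qnn that(2) by blast
        ultimately have "\<forall>a\<in>outs m na. q a x = 0"
          using sum_nonneg_eq_0_iff[OF finite_outs nn] by simp
        then show ?thesis using that by blast
      qed
      then have "(\<Sum>a\<in>outs m na. \<Sum>x\<in>ins m nx. q a x * R a x) = 0" by simp
      then show ?thesis using neg by simp
    qed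
  qed
qed


declare One_nat_def[simp del] add_2_eq_Suc'[simp del] add_2_eq_Suc[simp del]

lemma upd01_triv [simp]: "a(0 := \<alpha>, 1 := a 1) = (a(0 := \<alpha>) :: nat \<Rightarrow> nat)"
  by (auto simp: fun_eq_iff)

definition loc :: "nat \<Rightarrow> (nat \<Rightarrow> nat \<Rightarrow> nat) \<Rightarrow> tuple \<Rightarrow> tuple" where
  "loc m g x = restrict (\<lambda>i. g i (x i)) {..<m}"
definition det :: "nat \<Rightarrow> (nat \<Rightarrow> nat \<Rightarrow> nat) \<Rightarrow> state" where
  "det m g = (\<lambda>a x. if a = loc m g x then 1 else 0)"
definition validg :: "nat \<Rightarrow> (nat \<Rightarrow> nat) \<Rightarrow> (nat \<Rightarrow> nat) \<Rightarrow> (nat \<Rightarrow> nat \<Rightarrow> nat) \<Rightarrow> bool" where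
  "validg m nx na g = (\<forall>i<m. \<forall>v<nx i. g i v < na i)"

lemma loc_outs: "validg m nx na g \<Longrightarrow> x \<in> ins m nx \<Longrightarrow> loc m g x \<in> outs m na"
  by (auto simp: validg_def loc_def outs_def ins_def PiE_iff)

lemma sum_delta_nat:
  fixes f :: "nat \<Rightarrow> real"
  assumes "u < N" "\<And>u'. u' < N \<Longrightarrow> u' \<noteq> u \<Longrightarrow> f u' = 0"
  shows "(\<Sum>u'<N. f u') = f u"
proof -
  have "(\<Sum>u'<N. f u') = f u + (\<Sum>u'\<in>{..<N} - {u}. f u')"
    using assms(1) by (simp add: sum.remove)
  also have "(\<Sum>u'\<in>{..<N} - {u}. f u') = 0" using assms(2) by (intro sum.neutral) auto
  finally show ?thesis by simp
qed

lemma sum_delta_set: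
  fixes f :: "'a \<Rightarrow> real"
  assumes "finite A" "u \<in> A" "\<And>u'. u' \<in> A \<Longrightarrow> u' \<noteq> u \<Longrightarrow> f u' = 0"
  shows "(\<Sum>u'\<in>A. f u') = f u"
proof -
  have "(\<Sum>u'\<in>A. f u') = f u + (\<Sum>u'\<in>A - {u}. f u')"
    using assms(1,2) by (simp add: sum.remove)
  also have "(\<Sum>u'\<in>A - {u}. f u') = 0" using assms(3) by (intro sum.neutral) auto
  finally show ?thesis by simp
qed

lemma sum_upd_eq:
  assumes L: "L \<in> outs m na" and a: "a \<in> outs m na" and i: "i < m"
  shows "(\<Sum>b<na i. if a(i:=b) = L then 1 else 0 :: real) = (if (\<forall>j. j \<noteq> i \<longrightarrow> a j = L j) then 1 else 0)"
proof (cases "\<forall>j. j \<noteq> i \<longrightarrow> a j = L j")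
  case True
  have Li: "L i < na i" using L i by (auto simp: outs_def PiE_iff)
  have "(\<Sum>b<na i. if a(i:=b) = L then 1 else 0 :: real) = (\<Sum>b<na i. if b = L i then 1 else 0)"
  proof (rule sum.cong[OF refl])
    fix b
    have "(a(i:=b) = L) = (b = L i)" using True by (auto simp: fun_eq_iff)
    then show "(if a(i:=b) = L then 1 else 0 :: real) = (if b = L i then 1 else 0)" by simp
  qed
  also have "\<dots> = 1" using Li by simp
  finally show ?thesis using True by simp
next
  case False
  then obtain j where "j \<noteq> i" "a j \<noteq> L j" by blast
  then have "\<And>b. a(i:=b) \<noteq> L" by (metis fun_upd_other)
  then show ?thesis using False by simp
qed

lemma det_state:
  assumes v: "validg m nx na g"
  shows "det m g \<in> states m nx na"
  unfolding states_def is_state_def mem_Collect_eq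
proof (intro conjI ballI allI impI)
  fix a x show "0 \<le> det m g a x" by (simp add: det_def)
next
  fix x assume x: "x \<in> ins m nx"
  have "loc m g x \<in> outs m na" using loc_outs[OF v x] .
  then show "(\<Sum>a\<in>outs m na. det m g a x) = 1"
    using finite_outs by (simp add: det_def)
next
  fix i x y a assume h: "i < m" "x \<in> ins m nx" "y < nx i" "a \<in> outs m na"
  have L1: "loc m g x \<in> outs m na" using loc_outs[OF v h(2)] .
  have L2: "loc m g (x(i:=y)) \<in> outs m na" using loc_outs[OF v upd_ins[OF h(2,1,3)]] .
  have same: "(\<forall>j. j \<noteq> i \<longrightarrow> a j = loc m g x j) = (\<forall>j. j \<noteq> i \<longrightarrow> a j = loc m g (x(i:=y)) j)"
    by (auto simp: loc_def)
  show "(\<Sum>b<na i. det m g (a(i := b)) x) = (\<Sum>b<na i. det m g (a(i := b)) (x(i := y)))"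
    unfolding det_def using sum_upd_eq[OF L1 h(4,1)] sum_upd_eq[OF L2 h(4,1)] same by simp
qed

lemma det_pair:
  fixes T :: "tuple \<Rightarrow> tuple \<Rightarrow> real"
  assumes v: "validg m nx na g"
  shows "(\<Sum>a\<in>outs m na. \<Sum>x\<in>ins m nx. det m g a x * T a x) = (\<Sum>x\<in>ins m nx. T (loc m g x) x)"
proof -
  have "(\<Sum>a\<in>outs m na. \<Sum>x\<in>ins m nx. det m g a x * T a x) = (\<Sum>x\<in>ins m nx. \<Sum>a\<in>outs m na. det m g a x * T a x)"
    by (rule sum.swap)
  also have "\<dots> = (\<Sum>x\<in>ins m nx. T (loc m g x) x)"
  proof (rule sum.cong[OF refl])
    fix x assume x: "x \<in> ins m nx"
    show "(\<Sum>a\<in>outs m na. det m g a x * T a x) = T (loc m g x) x"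
      by (rule trans[OF sum_delta_set[OF finite_outs loc_outs[OF v x]]]) (auto simp: det_def)
  qed
  finally show ?thesis .
qed

locale bw =
  fixes n :: nat and nx na :: "nat \<Rightarrow> nat"
  assumes pos: "\<forall>i < n + 2. 0 < nx i \<and> 0 < na i"
    and cl: "\<forall>i. 2 \<le> i \<and> i < n + 2 \<longrightarrow> nx i = 1"
begin

abbreviation "m \<equiv> n + 2"
abbreviation "OUTS \<equiv> outs m na"
abbreviation "INS \<equiv> ins m nx"

definition xb :: "nat \<Rightarrow> nat \<Rightarrow> tuple" where
  "xb u v = (restrict (\<lambda>i. 0) {..<m})(0 := u, 1 := v)"

lemma xb_ins: "u < nx 0 \<Longrightarrow> v < nx 1 \<Longrightarrow> xb u v \<in> INS"
  using pos by (auto simp: xb_def ins_def PiE_iff extensional_def)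

lemma xb_simps [simp]: "xb u v 0 = u" "xb u v 1 = v" by (auto simp: xb_def)

lemma xb_inj [simp]: "(xb u v = xb u' v') = (u = u' \<and> v = v')"
  by (metis xb_simps)

lemma ins_xb: assumes "x \<in> INS" shows "x = xb (x 0) (x 1)"
proof
  fix i
  show "x i = xb (x 0) (x 1) i"
  proof (cases "i < m")
    case True
    then have "x i < nx i" using assms by (auto simp: ins_def PiE_iff)
    then show ?thesis using cl True by (cases "i = 0 \<or> i = 1") (auto simp: xb_def)
  next
    case False
    then show ?thesis using assms by (auto simp: ins_def PiE_iff xb_def extensional_def)
  qed
qed

lemma ins_0 : "x \<in> INS \<Longrightarrow> x 0 < nx 0" and ins_1: "x \<in> INS \<Longrightarrow> x 1 < nx 1"
  by (auto simp: ins_def PiE_iff)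

lemma ins_eq: "INS = (\<lambda>(u,v). xb u v) ` ({..<nx 0} \<times> {..<nx 1})"
proof
  show "INS \<subseteq> (\<lambda>(u,v). xb u v) ` ({..<nx 0} \<times> {..<nx 1})"
  proof
    fix x assume x: "x \<in> INS"
    then show "x \<in> (\<lambda>(u,v). xb u v) ` ({..<nx 0} \<times> {..<nx 1})"
      using ins_xb[OF x] ins_0[OF x] ins_1[OF x] by (auto intro!: image_eqI[of _ _ "(x 0, x 1)"])
  qed
qed (auto intro: xb_ins)

lemma ins_sum: "(\<Sum>x\<in>INS. f x) = (\<Sum>u<nx 0. \<Sum>v<nx 1. f (xb u v))"
proof -
  have inj: "inj_on (\<lambda>(u,v). xb u v) ({..<nx 0} \<times> {..<nx 1})" by (auto simp: inj_on_def)
  have "(\<Sum>x\<in>INS. f x) = (\<Sum>(u,v)\<in>{..<nx 0} \<times> {..<nx 1}. f (xb u v))"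
    unfolding ins_eq using sum.reindex[OF inj, of f] by (simp add: comp_def case_prod_unfold)
  then show ?thesis by (simp add: sum.cartesian_product)
qed

lemma outs_upd0: "a \<in> OUTS \<Longrightarrow> b < na 0 \<Longrightarrow> a(0 := b) \<in> OUTS"
  by (rule upd_outs) auto
lemma outs_upd1: "a \<in> OUTS \<Longrightarrow> b < na 1 \<Longrightarrow> a(1 := b) \<in> OUTS"
  by (rule upd_outs) auto
lemma outs_0: "a \<in> OUTS \<Longrightarrow> a 0 < na 0" and outs_1: "a \<in> OUTS \<Longrightarrow> a 1 < na 1"
  by (auto simp: outs_def PiE_iff)
lemma outs_lt: "a \<in> OUTS \<Longrightarrow> i < m \<Longrightarrow> a i < na i"
  by (auto simp: outs_def PiE_iff)
lemma outs_ext: "a \<in> OUTS \<Longrightarrow> \<not> i < m \<Longrightarrow> a i = undefined"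
  by (auto simp: outs_def PiE_iff extensional_def)

end

locale bwT = bw +
  fixes T :: "tuple \<Rightarrow> tuple \<Rightarrow> real"
  assumes Tnn: "\<forall>a\<in>outs (n+2) na. \<forall>x\<in>ins (n+2) nx. 0 \<le> T a x"
    and Tunit: "\<forall>p\<in>states (n+2) nx na. (\<Sum>a\<in>outs (n+2) na. \<Sum>x\<in>ins (n+2) nx. p a x * T a x) = 1"
begin

lemma key:
  assumes a: "a \<in> OUTS" and A: "\<And>w. A w < na 0" and B: "\<And>w. B w < na 1"
  shows "(\<Sum>u<nx 0. \<Sum>v<nx 1. T (a(0 := A u, 1 := B v)) (xb u v)) = 1"
proof -
  define g where "g = (\<lambda>i w. if i = 0 then A w else if i = 1 then B w else a i)"
  have v: "validg m nx na g" using A B a by (auto simp: validg_def g_def intro: outs_lt)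
  have "(\<Sum>x\<in>INS. T (loc m g x) x) = 1"
    using Tunit det_state[OF v] det_pair[OF v, of T] by simp
  moreover have "loc m g (xb u v) = a(0 := A u, 1 := B v)" for u v
  proof
    fix i show "loc m g (xb u v) i = (a(0 := A u, 1 := B v)) i"
      using outs_ext[OF a, of i] by (auto simp: loc_def g_def xb_def)
  qed
  ultimately show ?thesis by (simp add: ins_sum)
qed

lemma Ftotal: "a \<in> OUTS \<Longrightarrow> (\<Sum>u<nx 0. \<Sum>v<nx 1. T a (xb u v)) = 1"
  using key[of a "\<lambda>_. a 0" "\<lambda>_. a 1"] outs_0 outs_1 by simp

lemma Fib:
  assumes a: "a \<in> OUTS" and al: "\<alpha> < na 0" and u: "u < nx 0"
  shows "(\<Sum>v<nx 1. T (a(0 := \<alpha>)) (xb u v)) = (\<Sum>v<nx 1. T a (xb u v))"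
proof -
  have "(\<Sum>u'<nx 0. \<Sum>v<nx 1. T (a(0 := ((\<lambda>_. a 0)(u := \<alpha>)) u', 1 := a 1)) (xb u' v)) = 1"
    using key[of a "(\<lambda>_. a 0)(u := \<alpha>)" "\<lambda>_. a 1"] a al outs_0 outs_1 by simp
  moreover have "(\<Sum>u'<nx 0. \<Sum>v<nx 1. T a (xb u' v)) = 1" using Ftotal[OF a] .
  ultimately have "(\<Sum>u'<nx 0. (\<Sum>v<nx 1. T (a(0 := ((\<lambda>_. a 0)(u := \<alpha>)) u', 1 := a 1)) (xb u' v)) - (\<Sum>v<nx 1. T a (xb u' v))) = 0"
    by (simp add: sum_subtractf)
  moreover have "(\<Sum>u'<nx 0. (\<Sum>v<nx 1. T (a(0 := ((\<lambda>_. a 0)(u := \<alpha>)) u', 1 := a 1)) (xb u' v)) - (\<Sum>v<nx 1. T a (xb u' v)))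
      = (\<Sum>v<nx 1. T (a(0 := \<alpha>)) (xb u v)) - (\<Sum>v<nx 1. T a (xb u v))"
    by (rule trans[OF sum_delta_nat[OF u]]) auto
  ultimately show ?thesis by simp
qed

lemma Fii:
  assumes a: "a \<in> OUTS" and be: "\<beta> < na 1" and v: "v < nx 1"
  shows "(\<Sum>u<nx 0. T (a(1 := \<beta>)) (xb u v)) = (\<Sum>u<nx 0. T a (xb u v))"
proof -
  have "(\<Sum>u<nx 0. \<Sum>v'<nx 1. T (a(0 := a 0, 1 := ((\<lambda>_. a 1)(v := \<beta>)) v')) (xb u v')) = 1"
    using key[of a "\<lambda>_. a 0" "(\<lambda>_. a 1)(v := \<beta>)"] a be outs_0 outs_1 by simp
  moreover have "(\<Sum>u<nx 0. \<Sum>v'<nx 1. T a (xb u v')) = 1" using Ftotal[OF a] .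
  moreover have "(\<Sum>v'<nx 1. \<Sum>u<nx 0. T (a(0 := a 0, 1 := ((\<lambda>_. a 1)(v := \<beta>)) v')) (xb u v')) =
      (\<Sum>u<nx 0. \<Sum>v'<nx 1. T (a(0 := a 0, 1 := ((\<lambda>_. a 1)(v := \<beta>)) v')) (xb u v'))"
    by (rule sum.swap)
  moreover have "(\<Sum>v'<nx 1. \<Sum>u<nx 0. T a (xb u v')) = (\<Sum>u<nx 0. \<Sum>v'<nx 1. T a (xb u v'))"
    by (rule sum.swap)
  ultimately have "(\<Sum>v'<nx 1. \<Sum>u<nx 0. T (a(0 := a 0, 1 := ((\<lambda>_. a 1)(v := \<beta>)) v')) (xb u v')) =
                   (\<Sum>v'<nx 1. \<Sum>u<nx 0. T a (xb u v'))"
    by simp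
  then have "(\<Sum>v'<nx 1. (\<Sum>u<nx 0. T (a(0 := a 0, 1 := ((\<lambda>_. a 1)(v := \<beta>)) v')) (xb u v')) - (\<Sum>u<nx 0. T a (xb u v'))) = 0"
    by (simp add: sum_subtractf)
  moreover have "(\<Sum>v'<nx 1. (\<Sum>u<nx 0. T (a(0 := a 0, 1 := ((\<lambda>_. a 1)(v := \<beta>)) v')) (xb u v')) - (\<Sum>u<nx 0. T a (xb u v')))
      = (\<Sum>u<nx 0. T (a(1 := \<beta>)) (xb u v)) - (\<Sum>u<nx 0. T a (xb u v))"
    by (rule trans[OF sum_delta_nat[OF v]]) auto
  ultimately show ?thesis by simp
qed

lemma Fia:
  assumes a: "a \<in> OUTS" and al: "\<alpha> < na 0" and be: "\<beta> < na 1" and u: "u < nx 0" and v: "v < nx 1"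
  shows "T a (xb u v) - T (a(0 := \<alpha>)) (xb u v) = T (a(1 := \<beta>)) (xb u v) - T (a(0 := \<alpha>, 1 := \<beta>)) (xb u v)"
proof -
  define A1 where "A1 = (\<lambda>_::nat. a 0)(u := \<alpha>)"
  define B1 where "B1 = (\<lambda>_::nat. a 1)(v := \<beta>)"
  define G where "G = (\<lambda>A B u' v'. T (a(0 := A u', 1 := B v')) (xb u' v'))"
  have k1: "(\<Sum>u'<nx 0. \<Sum>v'<nx 1. G A1 B1 u' v') = 1" unfolding G_def
    by (rule key[OF a]) (use al be outs_0[OF a] outs_1[OF a] in \<open>auto simp: A1_def B1_def\<close>)
  have k2: "(\<Sum>u'<nx 0. \<Sum>v'<nx 1. G (\<lambda>_. a 0) B1 u' v') = 1" unfolding G_def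
    by (rule key[OF a]) (use al be outs_0[OF a] outs_1[OF a] in \<open>auto simp: A1_def B1_def\<close>)
  have k3: "(\<Sum>u'<nx 0. \<Sum>v'<nx 1. G A1 (\<lambda>_. a 1) u' v') = 1" unfolding G_def
    by (rule key[OF a]) (use al be outs_0[OF a] outs_1[OF a] in \<open>auto simp: A1_def B1_def\<close>)
  have k4: "(\<Sum>u'<nx 0. \<Sum>v'<nx 1. G (\<lambda>_. a 0) (\<lambda>_. a 1) u' v') = 1" unfolding G_def
    by (rule key[OF a]) (use al be outs_0[OF a] outs_1[OF a] in \<open>auto simp: A1_def B1_def\<close>)
  define D where "D = (\<lambda>u' v'. G (\<lambda>_. a 0) (\<lambda>_. a 1) u' v' - G A1 (\<lambda>_. a 1) u' v' - G (\<lambda>_. a 0) B1 u' v' + G A1 B1 u' v')"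
  have "(\<Sum>u'<nx 0. \<Sum>v'<nx 1. D u' v') = 0"
    using k1 k2 k3 k4 by (simp add: D_def sum.distrib sum_subtractf)
  moreover have "(\<Sum>u'<nx 0. \<Sum>v'<nx 1. D u' v') = D u v"
  proof (rule trans[OF sum_delta_nat[OF u]])
    fix u' assume "u' < nx 0" "u' \<noteq> u"
    then show "(\<Sum>v'<nx 1. D u' v') = 0" by (simp add: D_def A1_def G_def)
  next
    show "(\<Sum>v'<nx 1. D u v') = D u v"
      by (rule sum_delta_nat[OF v]) (simp add: D_def B1_def G_def)
  qed
  ultimately have D0: "D u v = 0" by simp
  have g1: "G (\<lambda>_. a 0) (\<lambda>_. a 1) u v = T a (xb u v)" by (simp add: G_def)
  have g2: "G A1 (\<lambda>_. a 1) u v = T (a(0 := \<alpha>)) (xb u v)" by (simp add: G_def A1_def)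
  have g3: "G (\<lambda>_. a 0) B1 u v = T (a(1 := \<beta>)) (xb u v)" by (simp add: G_def B1_def)
  have g4: "G A1 B1 u v = T (a(0 := \<alpha>, 1 := \<beta>)) (xb u v)" by (simp add: G_def A1_def B1_def)
  have "D u v = T a (xb u v) - T (a(0 := \<alpha>)) (xb u v) - T (a(1 := \<beta>)) (xb u v) + T (a(0 := \<alpha>, 1 := \<beta>)) (xb u v)"
    unfolding D_def g1 g2 g3 g4 by (rule refl)
  then show ?thesis using D0 by linarith
qed

end


context bwT
begin

definition mu :: "tuple \<Rightarrow> nat \<Rightarrow> nat \<Rightarrow> real" where
  "mu a u v = Min ((\<lambda>b. T (a(0 := 0, 1 := b)) (xb u v)) ` {..<na 1})"
definition S :: "tuple \<Rightarrow> nat \<Rightarrow> nat \<Rightarrow> real" where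
  "S a u v = T (a(0 := 0)) (xb u v) - mu a u v"
definition nu :: "tuple \<Rightarrow> nat \<Rightarrow> nat \<Rightarrow> real" where
  "nu a u v = T a (xb u v) - S a u v"
definition mA :: "tuple \<Rightarrow> nat \<Rightarrow> real" where
  "mA a u = (\<Sum>v<nx 1. nu a u v)"
definition eB :: "tuple \<Rightarrow> nat \<Rightarrow> real" where
  "eB a v = (\<Sum>u<nx 0. S a u v)"

lemma na1: "0 < na 1" and na0: "0 < na 0" and nx0: "0 < nx 0" and nx1: "0 < nx 1"
  using pos by auto

lemma mu_le: "b < na 1 \<Longrightarrow> mu a u v \<le> T (a(0 := 0, 1 := b)) (xb u v)"
  unfolding mu_def by (rule Min_le) auto

lemma mu_att: "\<exists>b<na 1. mu a u v = T (a(0 := 0, 1 := b)) (xb u v)"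
proof -
  have "mu a u v \<in> (\<lambda>b. T (a(0 := 0, 1 := b)) (xb u v)) ` {..<na 1}"
    unfolding mu_def using na1 by (intro Min_in) auto
  then show ?thesis by auto
qed

lemma T_nn: "a \<in> OUTS \<Longrightarrow> u < nx 0 \<Longrightarrow> v < nx 1 \<Longrightarrow> 0 \<le> T a (xb u v)"
  using Tnn xb_ins by blast

lemma S_nn: assumes "a \<in> OUTS" shows "0 \<le> S a u v"
proof -
  have "mu a u v \<le> T (a(0 := 0, 1 := a 1)) (xb u v)" using mu_le outs_1[OF assms] by blast
  then show ?thesis by (simp add: S_def)
qed

lemma nu_alt: assumes a: "a \<in> OUTS" and u: "u < nx 0" and v: "v < nx 1" and b: "b < na 1"
  shows "T a (xb u v) - T (a(0 := 0)) (xb u v) = T (a(1 := b)) (xb u v) - T (a(0 := 0, 1 := b)) (xb u v)"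
  using Fia[OF a na0 b u v] .

lemma nu_nn: assumes a: "a \<in> OUTS" and u: "u < nx 0" and v: "v < nx 1" shows "0 \<le> nu a u v"
proof -
  obtain b where b: "b < na 1" "mu a u v = T (a(0 := 0, 1 := b)) (xb u v)" using mu_att by blast
  have "nu a u v = T (a(1 := b)) (xb u v)"
    using nu_alt[OF a u v b(1)] b(2) by (simp add: nu_def S_def)
  then show ?thesis using T_nn[OF outs_upd1[OF a b(1)] u v] by simp
qed

lemma S_upd0 [simp]: "S (a(0 := \<alpha>)) u v = S a u v"
  by (simp add: S_def mu_def)

lemma mu_upd1 [simp]: "mu (a(1 := \<beta>)) u v = mu a u v"
  by (simp add: mu_def fun_upd_twist[of 1 0])

lemma nu_upd1: assumes a: "a \<in> OUTS" and b: "\<beta> < na 1" and u: "u < nx 0" and v: "v < nx 1"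
  shows "nu (a(1 := \<beta>)) u v = nu a u v"
proof -
  have "a(1 := \<beta>, 0 := 0) = a(0 := 0, 1 := \<beta>)" by (simp add: fun_upd_twist)
  then show ?thesis using nu_alt[OF a u v b] by (simp add: nu_def S_def)
qed

lemma mA_upd1: "a \<in> OUTS \<Longrightarrow> \<beta> < na 1 \<Longrightarrow> u < nx 0 \<Longrightarrow> mA (a(1 := \<beta>)) u = mA a u"
  unfolding mA_def by (rule sum.cong) (auto simp: nu_upd1)

lemma mA_upd0: assumes a: "a \<in> OUTS" and al: "\<alpha> < na 0" and u: "u < nx 0"
  shows "mA (a(0 := \<alpha>)) u = mA a u"
proof -
  have "mA (a(0 := \<alpha>)) u = (\<Sum>v<nx 1. T (a(0 := \<alpha>)) (xb u v)) - (\<Sum>v<nx 1. S a u v)"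
    by (simp add: mA_def nu_def sum_subtractf)
  also have "\<dots> = (\<Sum>v<nx 1. T a (xb u v)) - (\<Sum>v<nx 1. S a u v)" using Fib[OF a al u] by simp
  also have "\<dots> = mA a u" by (simp add: mA_def nu_def sum_subtractf)
  finally show ?thesis .
qed

lemma eB_upd0 [simp]: "eB (a(0 := \<alpha>)) v = eB a v"
  by (simp add: eB_def)

lemma eB_upd1: assumes a: "a \<in> OUTS" and b: "\<beta> < na 1" and v: "v < nx 1"
  shows "eB (a(1 := \<beta>)) v = eB a v"
proof -
  have a0: "a(0 := 0) \<in> OUTS" using outs_upd0[OF a na0] .
  have e: "a(1 := \<beta>, 0 := 0) = a(0 := 0, 1 := \<beta>)" by (simp add: fun_upd_twist)
  have "eB (a(1 := \<beta>)) v = (\<Sum>u<nx 0. T (a(0 := 0, 1 := \<beta>)) (xb u v)) - (\<Sum>u<nx 0. mu a u v)"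
    by (simp add: eB_def S_def sum_subtractf e)
  also have "\<dots> = (\<Sum>u<nx 0. T (a(0 := 0)) (xb u v)) - (\<Sum>u<nx 0. mu a u v)"
    using Fii[OF a0 b v] by simp
  also have "\<dots> = eB a v" by (simp add: eB_def S_def sum_subtractf)
  finally show ?thesis .
qed

lemma total: assumes a: "a \<in> OUTS" shows "(\<Sum>u<nx 0. mA a u) + (\<Sum>v<nx 1. eB a v) = 1"
proof -
  have "(\<Sum>v<nx 1. eB a v) = (\<Sum>u<nx 0. \<Sum>v<nx 1. S a u v)"
    unfolding eB_def by (rule sum.swap)
  then have "(\<Sum>u<nx 0. mA a u) + (\<Sum>v<nx 1. eB a v) = (\<Sum>u<nx 0. \<Sum>v<nx 1. T a (xb u v))"
    by (simp add: mA_def nu_def sum.distrib[symmetric])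
  then show ?thesis using Ftotal[OF a] by simp
qed

lemma mA_nn: "a \<in> OUTS \<Longrightarrow> u < nx 0 \<Longrightarrow> 0 \<le> mA a u"
  unfolding mA_def by (intro sum_nonneg) (auto intro: nu_nn)
lemma eB_nn: "a \<in> OUTS \<Longrightarrow> v < nx 1 \<Longrightarrow> 0 \<le> eB a v"
  unfolding eB_def by (intro sum_nonneg) (auto intro: S_nn)

lemma nu_zero: assumes a: "a \<in> OUTS" and u: "u < nx 0" and v: "v < nx 1" and z: "mA a u = 0"
  shows "nu a u v = 0"
proof -
  have "\<forall>v'\<in>{..<nx 1}. nu a u v' = 0"
    using z sum_nonneg_eq_0_iff[of "{..<nx 1}" "\<lambda>v'. nu a u v'"] nu_nn[OF a u] by (simp add: mA_def)
  then show ?thesis using v by simp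
qed

lemma S_zero: assumes a: "a \<in> OUTS" and u: "u < nx 0" and v: "v < nx 1" and z: "eB a v = 0"
  shows "S a u v = 0"
proof -
  have "\<forall>u'\<in>{..<nx 0}. S a u' v = 0"
    using z sum_nonneg_eq_0_iff[of "{..<nx 0}" "\<lambda>u'. S a u' v"] S_nn[OF a] by (simp add: eB_def)
  then show ?thesis using u by simp
qed

definition ck :: "tuple \<Rightarrow> tuple" where "ck a = a(0 := 0, 1 := 0)"

lemma ck_outs: "a \<in> OUTS \<Longrightarrow> ck a \<in> OUTS"
  unfolding ck_def using outs_upd0 outs_upd1 na0 na1 by blast

lemma mA_ck: assumes a: "a \<in> OUTS" and u: "u < nx 0" shows "mA (ck a) u = mA a u"
proof -
  have a0: "a(0 := 0) \<in> OUTS" using outs_upd0[OF a na0] .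
  show ?thesis unfolding ck_def using mA_upd1[OF a0 na1 u] mA_upd0[OF a na0 u] by simp
qed

lemma eB_ck: assumes a: "a \<in> OUTS" and v: "v < nx 1" shows "eB (ck a) v = eB a v"
proof -
  have a0: "a(0 := 0) \<in> OUTS" using outs_upd0[OF a na0] .
  show ?thesis unfolding ck_def using eB_upd1[OF a0 na1 v] by simp
qed

lemma nu_ck: assumes a: "a \<in> OUTS" and u: "u < nx 0" and v: "v < nx 1"
  shows "nu ((ck a)(0 := a 0)) u v = nu a u v"
proof -
  have "(ck a)(0 := a 0) = a(1 := 0)" by (auto simp: ck_def fun_eq_iff)
  then show ?thesis using nu_upd1[OF a na1 u v] by simp
qed

lemma S_ck: "S ((ck a)(1 := a 1)) u v = S a u v"
proof -
  have "(ck a)(1 := a 1) = a(0 := 0)" by (auto simp: ck_def fun_eq_iff)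
  then show ?thesis by simp
qed

lemma T_split: "T a (xb u v) = nu a u v + S a u v"
  by (simp add: nu_def)

lemma mA_sum: "a \<in> OUTS \<Longrightarrow> u < nx 0 \<Longrightarrow> (\<Sum>v<nx 1. nu a u v) = mA a u"
  by (simp add: mA_def)

end


definition outh :: "(nat \<times> nat \<times> nat) list \<Rightarrow> nat \<Rightarrow> nat" where
  "outh h i = snd (snd (hd (filter (\<lambda>e. fst e = i) h)))"

lemma filter_pre:
  "filter (\<lambda>e. fst e = i) (map (\<lambda>j. (j+2, 0::nat, a (j+2))) [0..<k]) =
   (if 2 \<le> i \<and> i < k + 2 then [(i, 0, a i)] else [])"
  by (induction k) (auto simp: add_2_eq_Suc')

context bwT
begin

definition ckh :: "(nat \<times> nat \<times> nat) list \<Rightarrow> tuple" where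
  "ckh h = restrict (\<lambda>i. if i < 2 then 0 else outh h i) {..<m}"

definition sigma :: "(tuple \<Rightarrow> nat \<times> nat) \<Rightarrow> (tuple \<times> (nat \<times> nat) \<times> nat \<Rightarrow> nat) \<Rightarrow> strategy" where
  "sigma F1 F2 h = (if length h < n then (length h + 2, 0)
     else if length h = n then F1 (ckh h)
     else if length h = n + 1 then (1 - fst (F1 (ckh h)), F2 (ckh h, F1 (ckh h), outh h (fst (F1 (ckh h)))))
     else (0, 0))"

definition D1 :: "(nat \<times> nat) set" where
  "D1 = ({0} \<times> {..<nx 0}) \<union> ({1} \<times> {..<nx 1})"
definition CK :: "tuple set" where "CK = ck ` OUTS"
definition Dom2 :: "(tuple \<times> (nat \<times> nat) \<times> nat) set" where
  "Dom2 = CK \<times> (SIGMA bq:D1. {..<na (fst bq)})"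
definition V2 :: "tuple \<times> (nat \<times> nat) \<times> nat \<Rightarrow> nat set" where
  "V2 d = {..<nx (1 - fst (fst (snd d)))}"
definition X :: "nat \<times> nat \<Rightarrow> nat \<Rightarrow> tuple" where
  "X bq w2 = (if fst bq = 0 then xb (snd bq) w2 else xb w2 (snd bq))"

lemma run_pre: "k \<le> n \<Longrightarrow> run (sigma F1 F2) a k = map (\<lambda>j. (j+2, 0, a (j+2))) [0..<k]"
  by (induction k) (auto simp: sigma_def Let_def)

lemma ckh_pre: assumes a: "a \<in> OUTS" and t: "\<forall>e\<in>set t. fst e < 2"
  shows "ckh (map (\<lambda>j. (j+2, 0, a (j+2))) [0..<n] @ t) = ck a"
proof
  fix i
  have f: "filter (\<lambda>e. fst e = i) t = []" if "2 \<le> i" using t that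
    by (auto simp: filter_empty_conv)
  show "ckh (map (\<lambda>j. (j+2, 0, a (j+2))) [0..<n] @ t) i = ck a i"
  proof (cases "i < m")
    case True
    then show ?thesis
      by (cases "i < 2") (auto simp: ckh_def ck_def outh_def filter_pre f)
  next
    case False
    then show ?thesis using outs_ext[OF a False] by (auto simp: ckh_def ck_def)
  qed
qed

lemma D1_fst: "bq \<in> D1 \<Longrightarrow> fst bq < 2" by (auto simp: D1_def)
lemma D1_snd: "bq \<in> D1 \<Longrightarrow> snd bq < nx (fst bq)" by (auto simp: D1_def)

context
  fixes F1 F2 assumes F1: "F1 \<in> PiE CK (\<lambda>_. D1)" and F2: "F2 \<in> PiE Dom2 V2"
begin

lemma F1D: "a \<in> OUTS \<Longrightarrow> F1 (ck a) \<in> D1"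
  using F1 by (auto simp: CK_def PiE_iff)

lemma F2D: assumes a: "a \<in> OUTS"
  shows "F2 (ck a, F1 (ck a), a (fst (F1 (ck a)))) < nx (1 - fst (F1 (ck a)))"
proof -
  have "(ck a, F1 (ck a), a (fst (F1 (ck a)))) \<in> Dom2"
    using F1D[OF a] outs_lt[OF a, of "fst (F1 (ck a))"] D1_fst[OF F1D[OF a]] a
    by (auto simp: Dom2_def CK_def)
  then show ?thesis using F2 by (auto simp: PiE_iff V2_def)
qed

lemma run_n1: assumes a: "a \<in> OUTS"
  shows "run (sigma F1 F2) a (Suc n) = map (\<lambda>j. (j+2, 0, a (j+2))) [0..<n] @ [(fst (F1 (ck a)), snd (F1 (ck a)), a (fst (F1 (ck a))))]"
  using run_pre[of n F1 F2 a] ckh_pre[OF a, of "[]"] by (simp add: sigma_def)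

lemma outh_n1: assumes a: "a \<in> OUTS" and "b < 2"
  shows "outh (map (\<lambda>j. (j+2, 0, a (j+2))) [0..<n] @ [e]) b = (if fst e = b then snd (snd e) else outh [] b)"
  using assms(2) by (auto simp: outh_def filter_pre)

lemma run_n2: assumes a: "a \<in> OUTS"
  shows "run (sigma F1 F2) a (n + 2) = map (\<lambda>j. (j+2, 0, a (j+2))) [0..<n] @
     [(fst (F1 (ck a)), snd (F1 (ck a)), a (fst (F1 (ck a)))),
      (1 - fst (F1 (ck a)), F2 (ck a, F1 (ck a), a (fst (F1 (ck a)))), a (1 - fst (F1 (ck a))))]"
proof -
  have b: "fst (F1 (ck a)) < 2" using D1_fst[OF F1D[OF a]] .
  have c: "ckh (map (\<lambda>j. (j+2, 0, a (j+2))) [0..<n] @ [(fst (F1 (ck a)), snd (F1 (ck a)), a (fst (F1 (ck a))))]) = ck a"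
    using ckh_pre[OF a] b by simp
  have o: "outh (map (\<lambda>j. (j+2, 0, a (j+2))) [0..<n] @ [(fst (F1 (ck a)), snd (F1 (ck a)), a (fst (F1 (ck a))))]) (fst (F1 (ck a))) = a (fst (F1 (ck a)))"
    using outh_n1[OF a b] by simp
  have e: "n + 2 = Suc (Suc n)" by simp
  have r: "run (sigma F1 F2) a (Suc (Suc n)) = (let h = run (sigma F1 F2) a (Suc n) in h @ [(fst (sigma F1 F2 h), snd (sigma F1 F2 h), a (fst (sigma F1 F2 h)))])"
    by (rule run.simps(2))
  show ?thesis unfolding e r run_n1[OF a] Let_def using c o by (simp add: sigma_def)
qed

lemma inputs_used_eq: assumes a: "a \<in> OUTS"
  shows "inputs_used m (sigma F1 F2) a = X (F1 (ck a)) (F2 (ck a, F1 (ck a), a (fst (F1 (ck a)))))"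
proof
  fix i
  define bq where "bq = F1 (ck a)"
  define w2 where "w2 = F2 (ck a, F1 (ck a), a (fst (F1 (ck a))))"
  have b: "fst bq < 2" using D1_fst[OF F1D[OF a]] by (simp add: bq_def)
  have H: "run (sigma F1 F2) a m = map (\<lambda>j. (j+2, 0, a (j+2))) [0..<n] @ [(fst bq, snd bq, a (fst bq)), (1 - fst bq, w2, a (1 - fst bq))]"
    using run_n2[OF a] by (simp add: bq_def w2_def)
  show "inputs_used m (sigma F1 F2) a i = X (F1 (ck a)) w2 i"
  proof (cases "i < m")
    case True
    show ?thesis
    proof (cases "i < 2")
      case True
      then have "i = 0 \<or> i = 1" by auto
      then show ?thesis using b \<open>i < m\<close> unfolding bq_def[symmetric]
        by (cases "fst bq = 0") (auto simp: inputs_used_def H input_at_def filter_pre X_def)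
    next
      case False
      then show ?thesis using \<open>i < m\<close> unfolding bq_def[symmetric]
        by (auto simp: inputs_used_def H input_at_def filter_pre X_def xb_def)
    qed
  next
    case False
    then show ?thesis by (auto simp: inputs_used_def X_def xb_def)
  qed
qed

lemma valid: "valid_strategy m nx na (sigma F1 F2)"
  unfolding valid_strategy_def Let_def
proof (intro ballI allI impI)
  fix a k assume a: "a \<in> OUTS" and k: "k < m"
  have b: "fst (F1 (ck a)) < 2" using D1_fst[OF F1D[OF a]] .
  consider "k < n" | "k = n" | "k = Suc n" using k by linarith
  then show "fst (sigma F1 F2 (run (sigma F1 F2) a k)) < m \<and>
         fst (sigma F1 F2 (run (sigma F1 F2) a k)) \<notin> fst ` set (run (sigma F1 F2) a k) \<and>
         snd (sigma F1 F2 (run (sigma F1 F2) a k)) < nx (fst (sigma F1 F2 (run (sigma F1 F2) a k)))"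
  proof cases
    case 1
    then show ?thesis using run_pre[of k F1 F2 a] cl by (auto simp: sigma_def)
  next
    case 2
    then show ?thesis using run_pre[of n F1 F2 a] ckh_pre[OF a, of "[]"] b D1_snd[OF F1D[OF a]]
      by (auto simp: sigma_def)
  next
    case 3
    define L1 where "L1 = map (\<lambda>j. (j+2, 0, a (j+2))) [0..<n] @ [(fst (F1 (ck a)), snd (F1 (ck a)), a (fst (F1 (ck a))))]"
    have rn: "run (sigma F1 F2) a k = L1" using run_n1[OF a] 3 by (simp add: L1_def)
    have c: "ckh L1 = ck a" using ckh_pre[OF a] b by (simp add: L1_def)
    have o: "outh L1 (fst (F1 (ck a))) = a (fst (F1 (ck a)))"
      using outh_n1[OF a b] by (simp add: L1_def)
    have len: "length L1 = Suc n" by (simp add: L1_def)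
    have st: "fst ` set L1 = {j + 2 | j. j < n} \<union> {fst (F1 (ck a))}" by (auto simp: L1_def image_iff)
    have ne: "1 - fst (F1 (ck a)) \<noteq> fst (F1 (ck a))" using b by arith
    have "1 - fst (F1 (ck a)) \<notin> fst ` set L1" unfolding st using b ne by auto
    then show ?thesis unfolding rn using c o len b F2D[OF a] by (simp add: sigma_def)
  qed
qed

end

end


lemma marg:
  fixes \<pi> :: "'a \<Rightarrow> 'b \<Rightarrow> real"
  assumes A: "finite A" and d: "d \<in> A" and B: "\<And>d'. d' \<in> A \<Longrightarrow> finite (B d')"
    and s: "\<And>d'. d' \<in> A \<Longrightarrow> (\<Sum>v\<in>B d'. \<pi> d' v) = 1"
  shows "(\<Sum>f\<in>PiE A B. (\<Prod>d'\<in>A. \<pi> d' (f d')) * G (f d)) = (\<Sum>v\<in>B d. \<pi> d v * G v)"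
proof -
  define F where "F = (\<lambda>d' v. \<pi> d' v * (if d' = d then G v else 1))"
  have "(\<Prod>d'\<in>A. sum (F d') (B d')) = (\<Sum>g\<in>PiE A B. \<Prod>d'\<in>A. F d' (g d'))"
    by (rule prod_sum_PiE[OF A B])
  moreover have "(\<Prod>d'\<in>A. sum (F d') (B d')) = (\<Sum>v\<in>B d. \<pi> d v * G v)"
  proof -
    have "(\<Prod>d'\<in>A. sum (F d') (B d')) = sum (F d) (B d) * (\<Prod>d'\<in>A - {d}. sum (F d') (B d'))"
      using A d by (simp add: prod.remove)
    also have "(\<Prod>d'\<in>A - {d}. sum (F d') (B d')) = 1"
      by (rule prod.neutral) (auto simp: F_def s)
    finally show ?thesis by (simp add: F_def)
  qed
  moreover have "(\<Prod>d'\<in>A. F d' (g d')) = (\<Prod>d'\<in>A. \<pi> d' (g d')) * G (g d)" for g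
  proof -
    have "(\<Prod>d'\<in>A. F d' (g d')) = (\<Prod>d'\<in>A. \<pi> d' (g d')) * (\<Prod>d'\<in>A. if d' = d then G (g d') else 1)"
      by (simp add: F_def prod.distrib)
    also have "(\<Prod>d'\<in>A. if d' = d then G (g d') else 1) = G (g d)"
      using A d by (simp add: prod.delta)
    finally show ?thesis .
  qed
  ultimately show ?thesis by simp
qed

lemma marg_total:
  fixes \<pi> :: "'a \<Rightarrow> 'b \<Rightarrow> real"
  assumes A: "finite A" and B: "\<And>d'. d' \<in> A \<Longrightarrow> finite (B d')"
    and s: "\<And>d'. d' \<in> A \<Longrightarrow> (\<Sum>v\<in>B d'. \<pi> d' v) = 1"
  shows "(\<Sum>f\<in>PiE A B. (\<Prod>d'\<in>A. \<pi> d' (f d'))) = 1"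
proof -
  have "(\<Prod>d'\<in>A. sum (\<pi> d') (B d')) = (\<Sum>g\<in>PiE A B. \<Prod>d'\<in>A. \<pi> d' (g d'))"
    by (rule prod_sum_PiE[OF A B])
  then show ?thesis using s by simp
qed

context bwT
begin

lemma D1_sum: "(\<Sum>bq\<in>D1. f bq) = (\<Sum>w<nx 0. f (0, w)) + (\<Sum>w<nx 1. f (1, w))"
proof -
  have D: "D1 = Pair 0 ` {..<nx 0} \<union> Pair 1 ` {..<nx 1}" by (auto simp: D1_def)
  have "(\<Sum>bq\<in>D1. f bq) = (\<Sum>bq\<in>Pair 0 ` {..<nx 0}. f bq) + (\<Sum>bq\<in>Pair 1 ` {..<nx 1}. f bq)"
    unfolding D by (rule sum.union_disjoint) auto
  also have "\<dots> = (\<Sum>w<nx 0. f (0, w)) + (\<Sum>w<nx 1. f (1, w))"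
    by (simp add: sum.reindex inj_on_def)
  finally show ?thesis .
qed

lemma finite_D1: "finite D1" by (simp add: D1_def)
lemma finite_CK: "finite CK" by (simp add: CK_def finite_outs)
lemma finite_Dom2: "finite Dom2" using finite_CK finite_D1 by (simp add: Dom2_def)
lemma CK_outs: "c \<in> CK \<Longrightarrow> c \<in> OUTS" by (auto simp: CK_def ck_outs)

definition pi1 :: "tuple \<Rightarrow> nat \<times> nat \<Rightarrow> real" where
  "pi1 c bq = (if fst bq = 0 then mA c (snd bq) else eB c (snd bq))"
definition pi2 :: "tuple \<times> (nat \<times> nat) \<times> nat \<Rightarrow> nat \<Rightarrow> real" where
  "pi2 d w2 = (case d of (c, bq, ob) \<Rightarrow>
     if fst bq = 0 then (if mA c (snd bq) = 0 then (if w2 = 0 then 1 else 0) else nu (c(0 := ob)) (snd bq) w2 / mA c (snd bq))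
     else (if eB c (snd bq) = 0 then (if w2 = 0 then 1 else 0) else S (c(1 := ob)) w2 (snd bq) / eB c (snd bq)))"

lemma pi1_sum: "c \<in> CK \<Longrightarrow> (\<Sum>bq\<in>D1. pi1 c bq) = 1"
  using total[OF CK_outs] by (simp add: D1_sum pi1_def)

lemma pi1_nn: "c \<in> CK \<Longrightarrow> bq \<in> D1 \<Longrightarrow> 0 \<le> pi1 c bq"
  using CK_outs mA_nn eB_nn by (auto simp: pi1_def D1_def)

lemma pi2_sum: assumes d: "d \<in> Dom2" shows "(\<Sum>w2\<in>V2 d. pi2 d w2) = 1"
proof -
  obtain c bq ob where d': "d = (c, bq, ob)" by (cases d) auto
  have c: "c \<in> OUTS" and bq: "bq \<in> D1" and ob: "ob < na (fst bq)" using d d' CK_outs by (auto simp: Dom2_def)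
  show ?thesis
  proof (cases "fst bq = 0")
    case True
    have u: "snd bq < nx 0" using bq True by (auto simp: D1_def)
    have co: "c(0 := ob) \<in> OUTS" using outs_upd0[OF c] ob True by simp
    show ?thesis
    proof (cases "mA c (snd bq) = 0")
      case True
      then show ?thesis using \<open>fst bq = 0\<close> nx1 by (simp add: d' pi2_def V2_def)
    next
      case False
      have "(\<Sum>w2<nx 1. nu (c(0 := ob)) (snd bq) w2 / mA c (snd bq)) = mA (c(0 := ob)) (snd bq) / mA c (snd bq)"
        by (simp add: sum_divide_distrib[symmetric] mA_def)
      also have "\<dots> = 1" using mA_upd0[OF c _ u, of ob] ob True False by simp
      finally show ?thesis using \<open>fst bq = 0\<close> False by (simp add: d' pi2_def V2_def)
    qed
  next
    case False
    then have b1: "fst bq = 1" using bq by (auto simp: D1_def)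
    have v: "snd bq < nx 1" using bq b1 by (auto simp: D1_def)
    show ?thesis
    proof (cases "eB c (snd bq) = 0")
      case True
      then show ?thesis using b1 nx0 by (simp add: d' pi2_def V2_def)
    next
      case False
      have "(\<Sum>w2<nx 0. S (c(1 := ob)) w2 (snd bq) / eB c (snd bq)) = eB (c(1 := ob)) (snd bq) / eB c (snd bq)"
        by (simp add: sum_divide_distrib[symmetric] eB_def)
      also have "\<dots> = 1" using eB_upd1[OF c _ v, of ob] ob b1 False by simp
      finally show ?thesis using b1 False by (simp add: d' pi2_def V2_def)
    qed
  qed
qed

lemma pi2_nn: assumes d: "d \<in> Dom2" and w2: "w2 \<in> V2 d" shows "0 \<le> pi2 d w2"
proof -
  obtain c bq ob where d': "d = (c, bq, ob)" by (cases d) auto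
  have c: "c \<in> OUTS" and bq: "bq \<in> D1" and ob: "ob < na (fst bq)" using d d' CK_outs by (auto simp: Dom2_def)
  show ?thesis
  proof (cases "fst bq = 0")
    case True
    have u: "snd bq < nx 0" using bq True by (auto simp: D1_def)
    have co: "c(0 := ob) \<in> OUTS" using outs_upd0[OF c] ob True by simp
    have "w2 < nx 1" using w2 True by (simp add: V2_def d')
    then show ?thesis using True mA_nn[OF c u] nu_nn[OF co u, of w2]
      by (auto simp: d' pi2_def intro!: divide_nonneg_nonneg)
  next
    case False
    then have b1: "fst bq = 1" using bq by (auto simp: D1_def)
    have v: "snd bq < nx 1" using bq b1 by (auto simp: D1_def)
    have co: "c(1 := ob) \<in> OUTS" using outs_upd1[OF c] ob b1 by simp
    show ?thesis using b1 eB_nn[OF c v] S_nn[OF co]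
      by (auto simp: d' pi2_def intro!: divide_nonneg_nonneg)
  qed
qed


lemma V2_fin: "finite (V2 d)" by (simp add: V2_def)

lemma d2_Dom2: assumes a: "a \<in> OUTS" and bq: "bq \<in> D1" shows "(ck a, bq, a (fst bq)) \<in> Dom2"
  using a bq outs_lt[OF a, of "fst bq"] D1_fst[OF bq] by (auto simp: Dom2_def CK_def)

definition H :: "tuple \<Rightarrow> tuple \<Rightarrow> nat \<times> nat \<Rightarrow> real" where
  "H a x bq = (\<Sum>w2\<in>V2 (ck a, bq, a (fst bq)). pi2 (ck a, bq, a (fst bq)) w2 * (if x = X bq w2 then 1 else 0))"

lemma reach_inner:
  assumes a: "a \<in> OUTS" and F1: "F1 \<in> PiE CK (\<lambda>_. D1)"
  shows "(\<Sum>F2\<in>PiE Dom2 V2. (\<Prod>d\<in>Dom2. pi2 d (F2 d)) * (if x = X (F1 (ck a)) (F2 (ck a, F1 (ck a), a (fst (F1 (ck a))))) then 1 else 0))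
     = H a x (F1 (ck a))"
proof -
  have bq: "F1 (ck a) \<in> D1" using F1 a by (auto simp: CK_def PiE_iff)
  show ?thesis unfolding H_def
    by (rule marg[OF finite_Dom2 d2_Dom2[OF a bq] V2_fin pi2_sum])
qed

lemma reach_outer:
  assumes a: "a \<in> OUTS"
  shows "(\<Sum>F1\<in>PiE CK (\<lambda>_. D1). \<Sum>F2\<in>PiE Dom2 V2. (\<Prod>c\<in>CK. pi1 c (F1 c)) * (\<Prod>d\<in>Dom2. pi2 d (F2 d)) *
        (if x = X (F1 (ck a)) (F2 (ck a, F1 (ck a), a (fst (F1 (ck a))))) then 1 else 0))
     = (\<Sum>bq\<in>D1. pi1 (ck a) bq * H a x bq)"
proof -
  have "(\<Sum>F1\<in>PiE CK (\<lambda>_. D1). \<Sum>F2\<in>PiE Dom2 V2. (\<Prod>c\<in>CK. pi1 c (F1 c)) * (\<Prod>d\<in>Dom2. pi2 d (F2 d)) *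
        (if x = X (F1 (ck a)) (F2 (ck a, F1 (ck a), a (fst (F1 (ck a))))) then 1 else 0))
     = (\<Sum>F1\<in>PiE CK (\<lambda>_. D1). (\<Prod>c\<in>CK. pi1 c (F1 c)) * H a x (F1 (ck a)))"
  proof (rule sum.cong[OF refl])
    fix F1 assume F1: "F1 \<in> PiE CK (\<lambda>_. D1)"
    show "(\<Sum>F2\<in>PiE Dom2 V2. (\<Prod>c\<in>CK. pi1 c (F1 c)) * (\<Prod>d\<in>Dom2. pi2 d (F2 d)) *
        (if x = X (F1 (ck a)) (F2 (ck a, F1 (ck a), a (fst (F1 (ck a))))) then 1 else 0))
      = (\<Prod>c\<in>CK. pi1 c (F1 c)) * H a x (F1 (ck a))"
      using reach_inner[OF a F1, of x] by (simp add: mult.assoc flip: sum_distrib_left)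
  qed
  also have "\<dots> = (\<Sum>bq\<in>D1. pi1 (ck a) bq * H a x bq)"
    by (rule marg[OF finite_CK _ finite_D1 pi1_sum]) (simp add: CK_def a)
  finally show ?thesis .
qed

lemma reach_eval:
  assumes a: "a \<in> OUTS" and x: "x \<in> INS"
  shows "(\<Sum>bq\<in>D1. pi1 (ck a) bq * H a x bq) = T a x"
proof -
  define u where "u = x 0"
  define v where "v = x 1"
  have u: "u < nx 0" and v: "v < nx 1" using x by (auto simp: u_def v_def ins_0 ins_1)
  have xx: "x = xb u v" using ins_xb[OF x] by (simp add: u_def v_def)
  have H0: "H a x (0, w) = (if w = u then pi2 (ck a, (0, u), a 0) v else 0)" if w: "w < nx 0" for w
  proof (cases "w = u")
    case True
    have "H a x (0, w) = (\<Sum>w2<nx 1. pi2 (ck a, (0, u), a 0) w2 * (if v = w2 then 1 else 0))"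
      using True by (simp add: H_def V2_def X_def xx)
    also have "\<dots> = pi2 (ck a, (0, u), a 0) v" by (rule trans[OF sum_delta_nat[OF v]]) auto
    finally show ?thesis using True by simp
  next
    case False
    then show ?thesis by (auto simp: H_def V2_def X_def xx)
  qed
  have H1: "H a x (1, w) = (if w = v then pi2 (ck a, (1, v), a 1) u else 0)" if w: "w < nx 1" for w
  proof (cases "w = v")
    case True
    have "H a x (1, w) = (\<Sum>w2<nx 0. pi2 (ck a, (1, v), a 1) w2 * (if u = w2 then 1 else 0))"
      using True by (simp add: H_def V2_def X_def xx)
    also have "\<dots> = pi2 (ck a, (1, v), a 1) u" by (rule trans[OF sum_delta_nat[OF u]]) auto
    finally show ?thesis using True by simp
  next
    case False
    then show ?thesis by (auto simp: H_def V2_def X_def xx)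
  qed
  have s0: "(\<Sum>w<nx 0. pi1 (ck a) (0, w) * H a x (0, w)) = nu a u v"
  proof -
    have "(\<Sum>w<nx 0. pi1 (ck a) (0, w) * H a x (0, w)) = pi1 (ck a) (0, u) * H a x (0, u)"
      by (rule sum_delta_nat[OF u]) (simp add: H0)
    also have "\<dots> = mA (ck a) u * pi2 (ck a, (0, u), a 0) v" by (simp add: H0[OF u] pi1_def)
    also have "\<dots> = nu a u v"
    proof (cases "mA (ck a) u = 0")
      case True
      then have "nu a u v = 0" using nu_zero[OF a u v] mA_ck[OF a u] by simp
      then show ?thesis using True by simp
    next
      case False
      then show ?thesis by (simp add: pi2_def nu_ck[OF a u v])
    qed
    finally show ?thesis .
  qed
  have s1: "(\<Sum>w<nx 1. pi1 (ck a) (1, w) * H a x (1, w)) = S a u v"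
  proof -
    have "(\<Sum>w<nx 1. pi1 (ck a) (1, w) * H a x (1, w)) = pi1 (ck a) (1, v) * H a x (1, v)"
      by (rule sum_delta_nat[OF v]) (simp add: H1)
    also have "\<dots> = eB (ck a) v * pi2 (ck a, (1, v), a 1) u" by (simp add: H1[OF v] pi1_def)
    also have "\<dots> = S a u v"
    proof (cases "eB (ck a) v = 0")
      case True
      then have "S a u v = 0" using S_zero[OF a u v] eB_ck[OF a v] by simp
      then show ?thesis using True by simp
    next
      case False
      then show ?thesis by (simp add: pi2_def S_ck)
    qed
    finally show ?thesis .
  qed
  show ?thesis unfolding D1_sum s0 s1 using T_split[of a u v] xx by simp
qed

lemma reach:
  assumes a: "a \<in> OUTS" and x: "x \<in> INS"
  shows "(\<Sum>F1\<in>PiE CK (\<lambda>_. D1). \<Sum>F2\<in>PiE Dom2 V2. (\<Prod>c\<in>CK. pi1 c (F1 c)) * (\<Prod>d\<in>Dom2. pi2 d (F2 d)) *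
        (if x = X (F1 (ck a)) (F2 (ck a, F1 (ck a), a (fst (F1 (ck a))))) then 1 else 0)) = T a x"
  using reach_outer[OF a] reach_eval[OF a x] by simp

end


context bwT
begin

lemma X_ins: "bq \<in> D1 \<Longrightarrow> w2 < nx (1 - fst bq) \<Longrightarrow> X bq w2 \<in> INS"
  by (auto simp: D1_def X_def intro!: xb_ins)

lemma mixture:
  fixes Out :: "'r set" and mu :: "'r \<Rightarrow> state \<Rightarrow> real" and RR :: "'r \<Rightarrow> tuple \<Rightarrow> tuple \<Rightarrow> real"
  assumes fin: "finite Out" and r0: "r0 \<in> Out"
    and RRnn: "\<forall>r\<in>Out. \<forall>a\<in>OUTS. \<forall>x\<in>INS. 0 \<le> RR r a x"
    and Tsum: "\<forall>a\<in>OUTS. \<forall>x\<in>INS. T a x = (\<Sum>r\<in>Out. RR r a x)"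
    and rep: "\<forall>r\<in>Out. \<forall>p\<in>states m nx na. mu r p = (\<Sum>a\<in>OUTS. \<Sum>x\<in>INS. p a x * RR r a x)"
  shows "is_mixture_of_basic m nx na Out mu"
proof -
  define A3 where "A3 = OUTS \<times> INS"
  define pi3 where "pi3 = (\<lambda>ax r. if T (fst ax) (snd ax) = 0 then (if r = r0 then 1 else 0)
       else RR r (fst ax) (snd ax) / T (fst ax) (snd ax))"
  define PP where "PP = PiE CK (\<lambda>_. D1) \<times> PiE Dom2 V2 \<times> PiE A3 (\<lambda>_. Out)"
  define wt where "wt = (\<lambda>t. (\<Prod>c\<in>CK. pi1 c (fst t c)) * (\<Prod>d\<in>Dom2. pi2 d (fst (snd t) d)) *
       (\<Prod>i\<in>A3. pi3 i (snd (snd t) i)))"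
  define iu where "iu = (\<lambda>(t::(tuple \<Rightarrow> nat \<times> nat) \<times> (tuple \<times> (nat \<times> nat) \<times> nat \<Rightarrow> nat) \<times> (tuple \<times> tuple \<Rightarrow> 'r)) a. X (fst t (ck a)) (fst (snd t) (ck a, fst t (ck a), a (fst (fst t (ck a))))))"
  define BE where "BE = (\<lambda>t::(tuple \<Rightarrow> nat \<times> nat) \<times> (tuple \<times> (nat \<times> nat) \<times> nat \<Rightarrow> nat) \<times> (tuple \<times> tuple \<Rightarrow> 'r). basic_effect m nx na (sigma (fst t) (fst (snd t)))
       (\<lambda>a. snd (snd t) (a, inputs_used m (sigma (fst t) (fst (snd t))) a)))"
  have finA3: "finite A3" by (simp add: A3_def finite_outs finite_ins)
  have finPP: "finite PP" unfolding PP_def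
    using finite_CK finite_D1 finite_Dom2 V2_fin finA3 fin by (intro finite_cartesian_product finite_PiE) auto
  have pi3_sum: "(\<Sum>r\<in>Out. pi3 i r) = 1" if i: "i \<in> A3" for i
  proof (cases "T (fst i) (snd i) = 0")
    case True
    then show ?thesis using fin r0 by (simp add: pi3_def)
  next
    case False
    have "(\<Sum>r\<in>Out. pi3 i r) = (\<Sum>r\<in>Out. RR r (fst i) (snd i)) / T (fst i) (snd i)"
      using False by (simp add: pi3_def sum_divide_distrib)
    also have "\<dots> = 1" using Tsum i False by (auto simp: A3_def)
    finally show ?thesis .
  qed
  have pi3_nn: "0 \<le> pi3 i r" if i: "i \<in> A3" and r: "r \<in> Out" for i r
    using i r RRnn Tnn by (auto simp: pi3_def A3_def)
  have pi3_T: "T a x * pi3 (a, x) r = RR r a x" if a: "a \<in> OUTS" and x: "x \<in> INS" and r: "r \<in> Out" for a x r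
  proof (cases "T a x = 0")
    case True
    have "RR r a x \<le> (\<Sum>r\<in>Out. RR r a x)"
      using fin r RRnn a x by (intro member_le_sum) auto
    then have "RR r a x = 0" using True Tsum a x RRnn r by force
    then show ?thesis using True by simp
  next
    case False
    then show ?thesis by (simp add: pi3_def)
  qed
  have sumPP: "(\<Sum>t\<in>PP. f t) = (\<Sum>F1\<in>PiE CK (\<lambda>_. D1). \<Sum>F2\<in>PiE Dom2 V2. \<Sum>F3\<in>PiE A3 (\<lambda>_. Out). f (F1, F2, F3))" for f :: "_ \<Rightarrow> real"
    unfolding PP_def by (simp add: sum.cartesian_product)
  have wt_sum: "(\<Sum>t\<in>PP. wt t) = 1"
  proof -
    have s1: "(\<Sum>F1\<in>PiE CK (\<lambda>_. D1). \<Prod>c\<in>CK. pi1 c (F1 c)) = 1"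
      by (rule marg_total[OF finite_CK finite_D1 pi1_sum])
    have s2: "(\<Sum>F2\<in>PiE Dom2 V2. \<Prod>d\<in>Dom2. pi2 d (F2 d)) = 1"
      by (rule marg_total[OF finite_Dom2 V2_fin pi2_sum])
    have s3: "(\<Sum>F3\<in>PiE A3 (\<lambda>_. Out). \<Prod>i\<in>A3. pi3 i (F3 i)) = 1"
      by (rule marg_total[OF finA3 fin pi3_sum])
    show ?thesis unfolding sumPP wt_def
      by (simp add: s1 s2 s3 flip: sum_distrib_left sum_distrib_right)
  qed
  have wt_nn: "0 \<le> wt t" if t: "t \<in> PP" for t
  proof -
    have "0 \<le> (\<Prod>c\<in>CK. pi1 c (fst t c))" using t by (intro prod_nonneg) (auto simp: PP_def PiE_iff intro: pi1_nn)
    moreover have "0 \<le> (\<Prod>d\<in>Dom2. pi2 d (fst (snd t) d))" using t by (intro prod_nonneg) (auto simp: PP_def PiE_iff intro: pi2_nn)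
    moreover have "0 \<le> (\<Prod>i\<in>A3. pi3 i (snd (snd t) i))" using t by (intro prod_nonneg) (auto simp: PP_def PiE_iff intro: pi3_nn)
    ultimately show ?thesis by (simp add: wt_def)
  qed
  have tPP: "fst t \<in> PiE CK (\<lambda>_. D1)" "fst (snd t) \<in> PiE Dom2 V2" "snd (snd t) \<in> PiE A3 (\<lambda>_. Out)" if "t \<in> PP" for t
    using that by (auto simp: PP_def)
  have iu_eq: "inputs_used m (sigma (fst t) (fst (snd t))) a = iu t a" if t: "t \<in> PP" and a: "a \<in> OUTS" for t a
    using inputs_used_eq[OF tPP(1,2)[OF t] a] by (simp add: iu_def)
  have iu_ins: "iu t a \<in> INS" if t: "t \<in> PP" and a: "a \<in> OUTS" for t a
    unfolding iu_def using F1D[OF tPP(1,2)[OF t] a] F2D[OF tPP(1,2)[OF t] a] by (rule X_ins)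
  have basic: "is_basic_measurement m nx na Out (BE t)" if t: "t \<in> PP" for t
    unfolding is_basic_measurement_def
  proof (intro exI conjI ballI)
    show "valid_strategy m nx na (sigma (fst t) (fst (snd t)))" using valid[OF tPP(1,2)[OF t]] .
  next
    fix a assume a: "a \<in> OUTS"
    have "(a, inputs_used m (sigma (fst t) (fst (snd t))) a) \<in> A3"
      using iu_eq[OF t a] iu_ins[OF t a] a by (simp add: A3_def)
    then show "snd (snd t) (a, inputs_used m (sigma (fst t) (fst (snd t))) a) \<in> Out"
      using tPP(3)[OF t] by auto
  next
    fix r p show "BE t r p = basic_effect m nx na (sigma (fst t) (fst (snd t)))
       (\<lambda>a. snd (snd t) (a, inputs_used m (sigma (fst t) (fst (snd t))) a)) r p" by (simp add: BE_def)
  qed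
  have BE_eq: "BE t r p = (\<Sum>a\<in>OUTS. \<Sum>x\<in>INS. p a x * ((if x = iu t a then 1 else 0) * (if snd (snd t) (a, x) = r then 1 else 0)))"
    if t: "t \<in> PP" for t r p
    unfolding BE_def basic_effect_def
  proof (intro sum.cong refl)
    fix a x assume a: "a \<in> OUTS"
    show "p a x * (if snd (snd t) (a, inputs_used m (sigma (fst t) (fst (snd t))) a) = r \<and> x = inputs_used m (sigma (fst t) (fst (snd t))) a then 1 else 0)
       = p a x * ((if x = iu t a then 1 else 0) * (if snd (snd t) (a, x) = r then 1 else 0))"
      using iu_eq[OF t a] by auto
  qed
  have main: "(\<Sum>t\<in>PP. wt t * BE t r p) = mu r p" if r: "r \<in> Out" and p: "p \<in> states m nx na" for r p
  proof -
    define K where "K = (\<lambda>t a x. (if x = iu t a then 1 else 0) * (if snd (snd t) (a, x) = r then 1 else (0::real)))"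
    have "(\<Sum>t\<in>PP. wt t * BE t r p) = (\<Sum>t\<in>PP. \<Sum>a\<in>OUTS. \<Sum>x\<in>INS. p a x * (wt t * K t a x))"
      by (rule sum.cong[OF refl]) (simp add: BE_eq K_def sum_distrib_left algebra_simps)
    also have "\<dots> = (\<Sum>a\<in>OUTS. \<Sum>t\<in>PP. \<Sum>x\<in>INS. p a x * (wt t * K t a x))" by (rule sum.swap)
    also have "\<dots> = (\<Sum>a\<in>OUTS. \<Sum>x\<in>INS. \<Sum>t\<in>PP. p a x * (wt t * K t a x))"
      by (rule sum.cong[OF refl]) (rule sum.swap)
    also have "\<dots> = (\<Sum>a\<in>OUTS. \<Sum>x\<in>INS. p a x * RR r a x)"
    proof (intro sum.cong refl)
      fix a x assume a: "a \<in> OUTS" and x: "x \<in> INS"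
      have ax: "(a, x) \<in> A3" using a x by (simp add: A3_def)
      have m3: "(\<Sum>F3\<in>PiE A3 (\<lambda>_. Out). (\<Prod>i\<in>A3. pi3 i (F3 i)) * (if F3 (a, x) = r then 1 else 0)) = pi3 (a, x) r"
      proof -
        have "(\<Sum>F3\<in>PiE A3 (\<lambda>_. Out). (\<Prod>i\<in>A3. pi3 i (F3 i)) * (if F3 (a, x) = r then 1 else 0))
           = (\<Sum>v\<in>Out. pi3 (a, x) v * (if v = r then 1 else 0))"
          by (rule marg[where \<pi> = pi3 and B = "\<lambda>_. Out" and G = "\<lambda>v. if v = r then 1 else 0", OF finA3 ax fin pi3_sum])
        also have "\<dots> = pi3 (a, x) r" by (rule trans[OF sum_delta_set[OF fin r]]) auto
        finally show ?thesis .
      qed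
      have "(\<Sum>t\<in>PP. wt t * K t a x) =
          (\<Sum>F1\<in>PiE CK (\<lambda>_. D1). \<Sum>F2\<in>PiE Dom2 V2.
             ((\<Prod>c\<in>CK. pi1 c (F1 c)) * (\<Prod>d\<in>Dom2. pi2 d (F2 d)) *
               (if x = X (F1 (ck a)) (F2 (ck a, F1 (ck a), a (fst (F1 (ck a))))) then 1 else 0)) *
             (\<Sum>F3\<in>PiE A3 (\<lambda>_. Out). (\<Prod>i\<in>A3. pi3 i (F3 i)) * (if F3 (a, x) = r then 1 else 0)))"
        unfolding sumPP by (simp add: wt_def K_def iu_def sum_distrib_left sum_distrib_right algebra_simps)
      also have "\<dots> = T a x * pi3 (a, x) r"
        unfolding m3 using reach[OF a x] by (simp add: sum_distrib_right[symmetric])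
      also have "\<dots> = RR r a x" using pi3_T[OF a x r] .
      finally show "(\<Sum>t\<in>PP. p a x * (wt t * K t a x)) = p a x * RR r a x"
        by (simp add: sum_distrib_left[symmetric])
    qed
    also have "\<dots> = mu r p" using rep r p by simp
    finally show ?thesis .
  qed
  obtain en where en: "bij_betw en {0..<card PP} PP" using ex_bij_betw_nat_finite[OF finPP] by blast
  have en': "bij_betw en {..<card PP} PP" using en by (simp add: atLeast0LessThan)
  have enPP: "j < card PP \<Longrightarrow> en j \<in> PP" for j using en' by (auto simp: bij_betw_def)
  show ?thesis
    unfolding is_mixture_of_basic_def
  proof (intro exI[of _ "card PP"] exI[of _ "\<lambda>j. wt (en j)"] exI[of _ "\<lambda>j. BE (en j)"] conjI allI impI ballI)
    fix j assume "j < card PP" then show "0 \<le> wt (en j)" using wt_nn enPP by blast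
  next
    show "(\<Sum>j<card PP. wt (en j)) = 1" using sum.reindex_bij_betw[OF en', of wt] wt_sum by simp
  next
    fix j assume "j < card PP" then show "is_basic_measurement m nx na Out (BE (en j))" using basic enPP by blast
  next
    fix r p assume r: "r \<in> Out" and p: "p \<in> states m nx na"
    show "mu r p = (\<Sum>j<card PP. wt (en j) * BE (en j) r p)"
      using sum.reindex_bij_betw[OF en', of "\<lambda>t. wt t * BE t r p"] main[OF r p] by simp
  qed
qed

end


theorem lemma2:
  fixes n :: nat and nx na :: "nat \<Rightarrow> nat"
    and Out :: "'r set" and mu :: "'r \<Rightarrow> state \<Rightarrow> real"
  assumes "\<forall>i < n + 2. 0 < nx i \<and> 0 < na i"
    and "\<forall>i. 2 \<le> i \<and> i < n + 2 \<longrightarrow> nx i = 1"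
    and "is_measurement (n + 2) nx na Out mu"
  shows "is_basic_measurement (n + 2) nx na Out mu \<or> is_mixture_of_basic (n + 2) nx na Out mu"
proof -
  interpret bw n nx na using assms(1,2) by unfold_locales
  have fin: "finite Out" and eff: "\<forall>r\<in>Out. is_effect (n+2) nx na (mu r)"
    and one: "\<forall>p\<in>states (n+2) nx na. (\<Sum>r\<in>Out. mu r p) = 1"
    using assms(3) by (auto simp: is_measurement_def)
  have "\<forall>r\<in>Out. \<exists>R'. (\<forall>a\<in>OUTS. \<forall>x\<in>INS. 0 \<le> R' a x) \<and>
     (\<forall>p\<in>states (n+2) nx na. mu r p = (\<Sum>a\<in>OUTS. \<Sum>x\<in>INS. p a x * R' a x))"
  proof
    fix r assume r: "r \<in> Out"
    have ie: "is_effect (n+2) nx na (mu r)" using eff r by blast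
    then obtain R where R: "\<forall>p\<in>states (n+2) nx na. mu r p = (\<Sum>a\<in>OUTS. \<Sum>x\<in>INS. p a x * R a x)"
      unfolding is_effect_def by blast
    have b: "\<forall>p\<in>states (n+2) nx na. 0 \<le> mu r p \<and> mu r p \<le> 1"
      using ie unfolding is_effect_def by blast
    have pos: "\<forall>p\<in>states (n+2) nx na. 0 \<le> mu r p" using b by blast
    show "\<exists>R'. (\<forall>a\<in>OUTS. \<forall>x\<in>INS. 0 \<le> R' a x) \<and>
     (\<forall>p\<in>states (n+2) nx na. mu r p = (\<Sum>a\<in>OUTS. \<Sum>x\<in>INS. p a x * R' a x))"
      by (rule nonneg_rep[OF R pos])
  qed
  then have "\<exists>RR. \<forall>r\<in>Out. (\<forall>a\<in>OUTS. \<forall>x\<in>INS. 0 \<le> RR r a x) \<and>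
     (\<forall>p\<in>states (n+2) nx na. mu r p = (\<Sum>a\<in>OUTS. \<Sum>x\<in>INS. p a x * RR r a x))"
    by (rule bchoice)
  then obtain RR where RR: "\<forall>r\<in>Out. (\<forall>a\<in>OUTS. \<forall>x\<in>INS. 0 \<le> RR r a x) \<and>
     (\<forall>p\<in>states (n+2) nx na. mu r p = (\<Sum>a\<in>OUTS. \<Sum>x\<in>INS. p a x * RR r a x))" by blast
  have RRnn: "\<forall>r\<in>Out. \<forall>a\<in>OUTS. \<forall>x\<in>INS. 0 \<le> RR r a x" using RR by blast
  have rep: "\<forall>r\<in>Out. \<forall>p\<in>states (n+2) nx na. mu r p = (\<Sum>a\<in>OUTS. \<Sum>x\<in>INS. p a x * RR r a x)"
    using RR by blast
  define T where "T = (\<lambda>a x. \<Sum>r\<in>Out. RR r a x)"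
  have Tnn: "\<forall>a\<in>OUTS. \<forall>x\<in>INS. 0 \<le> T a x"
    using RRnn by (auto simp: T_def intro: sum_nonneg)
  have Tunit: "\<forall>p\<in>states (n+2) nx na. (\<Sum>a\<in>OUTS. \<Sum>x\<in>INS. p a x * T a x) = 1"
  proof
    fix p assume p: "p \<in> states (n+2) nx na"
    have "(\<Sum>a\<in>OUTS. \<Sum>x\<in>INS. p a x * T a x) = (\<Sum>a\<in>OUTS. \<Sum>x\<in>INS. \<Sum>r\<in>Out. p a x * RR r a x)"
      by (simp add: T_def sum_distrib_left)
    also have "\<dots> = (\<Sum>a\<in>OUTS. \<Sum>r\<in>Out. \<Sum>x\<in>INS. p a x * RR r a x)"
      by (rule sum.cong[OF refl]) (rule sum.swap)
    also have "\<dots> = (\<Sum>r\<in>Out. \<Sum>a\<in>OUTS. \<Sum>x\<in>INS. p a x * RR r a x)"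
      by (rule sum.swap)
    also have "\<dots> = (\<Sum>r\<in>Out. mu r p)" using rep p by simp
    also have "\<dots> = 1" using one p by simp
    finally show "(\<Sum>a\<in>OUTS. \<Sum>x\<in>INS. p a x * T a x) = 1" .
  qed
  interpret bwT n nx na T using Tnn Tunit by unfold_locales
  have "Out \<noteq> {}"
  proof
    assume e: "Out = {}"
    have v: "validg (n+2) nx na (\<lambda>i v. 0)" using assms(1) by (simp add: validg_def)
    have "det (n+2) (\<lambda>i v. 0) \<in> states (n+2) nx na" by (rule det_state[OF v])
    then show False using one e by simp
  qed
  then obtain r0 where r0: "r0 \<in> Out" by blast
  have "is_mixture_of_basic (n + 2) nx na Out mu"
    by (rule mixture[OF fin r0 RRnn _ rep]) (simp add: T_def)
  then show ?thesis by blast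
qed


end
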